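(* Let $K$ be a non-polar compact subset of $\mathbb C$, let $d\ge0$, and let $P(z)=a_dz^d+\dots+a_1z+a_0$ be a polynomial with complex coefficients, where $a_d$ may be zero. Then for every $k=0,\dots,d$, $$|a_k|\ \le\ \frac{\binom dk\,M(P)\,(\max_{z\in K}|z|)^{d-k}}{\mathrm{Cap}(K)^d}.$$
   Context: $\mu_K$ is the equilibrium measure of $K$ and $\mathrm{Cap}$ is logarithmic capacity. The Mahler measure of $P$ relative to $K$ is $M(P)=\exp[\int\log|P|\,d\mu_K]$, with $M(0)=0$. *)

theory Defs
  imports "HOL-Probability.Probability" "HOL-Computational_Algebra.Polynomial"
begin

definition prob_on :: "complex set \<Rightarrow> complex measure \<Rightarrow> bool" where
  "prob_on K \<mu> \<longleftrightarrow> sets \<mu> = sets borel \<and> prob_space \<mu> \<and> emeasure \<mu> (UNIV - K) = 0"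

text \<open>Logarithmic energy  I(mu) = double integral of log(1/|z-w|), with value +infinity
  if the diagonal carries positive mass or the kernel is not integrable
  (on a compact set the kernel is bounded below, so non-integrability means +infinity).\<close>
definition log_energy :: "complex measure \<Rightarrow> ereal" where
  "log_energy \<mu> =
     (if (AE p in \<mu> \<Otimes>\<^sub>M \<mu>. fst p \<noteq> snd p) \<and>
         integrable (\<mu> \<Otimes>\<^sub>M \<mu>) (\<lambda>p. - ln (cmod (fst p - snd p)))
      then ereal (\<integral>p. - ln (cmod (fst p - snd p)) \<partial>(\<mu> \<Otimes>\<^sub>M \<mu>))
      else \<infinity>)"

definition robin_const :: "complex set \<Rightarrow> ereal" where
  "robin_const K = Inf {log_energy \<mu> | \<mu>. prob_on K \<mu>}"

definition log_cap :: "complex set \<Rightarrow> real" where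
  "log_cap K = (if robin_const K = \<infinity> then 0 else exp (- real_of_ereal (robin_const K)))"

definition polar :: "complex set \<Rightarrow> bool" where
  "polar K \<longleftrightarrow> log_cap K = 0"

definition equilibrium_measure :: "complex set \<Rightarrow> complex measure \<Rightarrow> bool" where
  "equilibrium_measure K \<mu> \<longleftrightarrow> prob_on K \<mu> \<and> log_energy \<mu> = robin_const K"

text \<open>Mahler measure relative to mu: exp(integral log|P| dmu), M(0) = 0, and value 0
  when the integral is -infinity (log|P| is bounded above on compact K).\<close>
definition mahler :: "complex measure \<Rightarrow> complex poly \<Rightarrow> real" where
  "mahler \<mu> P =
     (if P = 0 then 0
      else if integrable \<mu> (\<lambda>z. ln (cmod (poly P z)))
      then exp (\<integral>z. ln (cmod (poly P z)) \<partial>\<mu>)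
      else 0)"

end

theory Submission
  imports Defs "HOL-Complex_Analysis.Complex_Analysis" "HOL-Computational_Algebra.Fundamental_Theorem_Algebra"
begin

lemma maxp:
  fixes f :: "complex \<Rightarrow> real" and F :: "complex set"
  assumes F: "closed F" and cont: "continuous_on F f"
  and mv: "\<And>w. w \<in> F \<Longrightarrow> f w > c \<Longrightarrow> \<exists>r::real>0. (\<forall>t. w + of_real r * cis t \<in> F) \<and>
            f w = integral {0..2*pi} (\<lambda>t. f (w + of_real r * cis t)) / (2*pi)"
  and inf: "\<And>w. w \<in> F \<Longrightarrow> norm w \<ge> B \<Longrightarrow> f w \<le> c"
  and w: "w \<in> F"
  shows "f w \<le> c"
proof (rule ccontr)
  assume "\<not> f w \<le> c"
  hence w1: "f w > c" by simp
  define S where "S = {x \<in> F. f x \<ge> f w}"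
  have "closed S" unfolding S_def
    using continuous_closed_preimage[OF cont F, of "{f w..}"] by (auto simp: vimage_def Int_def)
  moreover have "bounded S"
  proof -
    have "S \<subseteq> cball 0 B" using inf w1 by (force simp: S_def)
    thus ?thesis using bounded_cball bounded_subset by blast
  qed
  ultimately have cS: "compact S" by (simp add: compact_eq_bounded_closed)
  have wS: "w \<in> S" using w by (simp add: S_def)
  have contS: "continuous_on S f" using cont by (rule continuous_on_subset) (auto simp: S_def)
  obtain x0 where x0: "x0 \<in> S" "\<And>y. y \<in> S \<Longrightarrow> f y \<le> f x0"
    using continuous_attains_sup[OF cS _ contS] wS by blast
  define M where "M = f x0"
  define Mx where "Mx = {x \<in> S. f x = M}"
  have "closed Mx"
    using continuous_closed_preimage[OF contS \<open>closed S\<close>, of "{M}"] by (auto simp: Mx_def vimage_def Int_def)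
  moreover have "S \<inter> Mx = Mx" by (auto simp: Mx_def)
  ultimately have cMx: "compact Mx" using compact_Int_closed[OF cS, of Mx] by simp
  have "x0 \<in> Mx" using x0 by (simp add: Mx_def M_def)
  then obtain ws where ws: "ws \<in> Mx" "\<And>y. y \<in> Mx \<Longrightarrow> norm y \<le> norm ws"
    using continuous_attains_sup[OF cMx _ continuous_on_norm[OF continuous_on_id]] by blast
  have fle: "\<And>y. y \<in> F \<Longrightarrow> f y \<le> M"
  proof -
    fix y assume "y \<in> F"
    show "f y \<le> M"
    proof (cases "f y \<ge> f w")
      case True thus ?thesis using x0 \<open>y \<in> F\<close> by (auto simp: S_def M_def)
    next
      case False thus ?thesis using x0(2)[OF wS] by (simp add: M_def)
    qed
  qed
  have wsF: "ws \<in> F" and fws: "f ws = M" using ws(1) by (auto simp: Mx_def S_def)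
  have "M \<ge> f w" using x0(2)[OF wS] by (simp add: M_def)
  hence "f ws > c" using fws w1 by simp
  then obtain r where r: "r > 0" "\<And>t. ws + of_real r * cis t \<in> F"
     and avg: "f ws = integral {0..2*pi} (\<lambda>t. f (ws + of_real r * cis t)) / (2*pi)"
    using mv[OF wsF] by blast
  define g where "g t = M - f (ws + of_real r * cis t)" for t
  have contg: "continuous_on {0..2*pi} g"
    unfolding g_def
    by (intro continuous_intros continuous_on_compose2[OF cont]) (auto simp: r)
  have intf: "(\<lambda>t. f (ws + of_real r * cis t)) integrable_on {0..2*pi}"
    by (intro integrable_continuous_interval continuous_on_compose2[OF cont] continuous_intros) (auto simp: r)
  have "integral {0..2*pi} g = integral {0..2*pi} (\<lambda>t. M) - integral {0..2*pi} (\<lambda>t. f (ws + of_real r * cis t))"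
    unfolding g_def by (rule integral_diff) (auto simp: intf)
  also have "\<dots> = 0" using avg fws by simp
  finally have "integral (cbox 0 (2*pi)) g = 0" by simp
  hence g0: "\<forall>x\<in>cbox 0 (2*pi). g x = 0"
    using integral_cbox_eq_0_iff[of 0 "2*pi" g] contg fle r(2) pi_gt_zero by (auto simp: g_def)
  obtain t0 where t0: "t0 \<in> {0..2*pi}" "norm (ws + of_real r * cis t0) > norm ws"
  proof (cases "ws = 0")
    case True thus ?thesis using that[of 0] r by auto
  next
    case False
    define a where "a = (if Arg ws \<ge> 0 then Arg ws else Arg ws + 2*pi)"
    have "cis a = sgn ws" using cis_Arg[OF False] by (auto simp: a_def cis.ctr)
    hence "ws + of_real r * cis a = of_real (1 + r / norm ws) * ws"
      by (simp add: sgn_div_norm distrib_right scaleR_conv_of_real divide_inverse)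
    hence "norm (ws + of_real r * cis a) = \<bar>1 + r / norm ws\<bar> * norm ws"
      by (simp only: norm_mult norm_of_real)
    also have "\<dots> = norm ws + r" using False r
      by (simp add: field_simps)
    finally have "norm (ws + of_real r * cis a) = norm ws + r" .
    moreover have "a \<in> {0..2*pi}" using Arg_bounded[of ws] by (auto simp: a_def)
    ultimately show ?thesis using that[of a] r by auto
  qed
  have "f (ws + of_real r * cis t0) = M" using g0 t0(1) by (auto simp: g_def)
  hence "ws + of_real r * cis t0 \<in> Mx" using r(2) fle \<open>M \<ge> f w\<close> by (auto simp: Mx_def S_def)
  thus False using ws(2) t0(2) by force
qed

lemma jensen_unit:
  fixes c :: complex assumes c: "norm c < 1"
  shows "((\<lambda>t. ln (norm (1 + c * cis t))) has_integral 0) {0..2*pi}"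
proof -
  define \<rho> where "\<rho> = (if c = 0 then 2 else (1 + 1 / norm c) / 2)"
  have \<rho>1: "\<rho> > 1" using c by (auto simp: \<rho>_def field_simps)
  have \<rho>c: "\<rho> * norm c < 1"
  proof (cases "c = 0")
    case False
    hence "\<rho> * norm c = (norm c + 1) / 2" by (simp add: \<rho>_def field_simps)
    thus ?thesis using c by simp
  qed (simp add: \<rho>_def)
  define f where "f z = Ln (1 + c * z)" for z
  have re: "Re (1 + c * z) > 0" if "z \<in> ball 0 \<rho>" for z
  proof -
    have "norm (c * z) \<le> norm c * \<rho>" using that by (simp add: norm_mult mult_left_mono less_imp_le)
    hence "norm (c * z) < 1" using \<rho>c by (simp add: mult.commute)
    hence "\<bar>Re (c * z)\<bar> < 1" using abs_Re_le_cmod le_less_trans by blast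
    thus ?thesis by simp
  qed
  have nr: "1 + c * z \<notin> \<real>\<^sub>\<le>\<^sub>0" if "z \<in> ball 0 \<rho>" for z
    using re[OF that] by (auto simp: complex_nonpos_Reals_iff)
  have hol: "f holomorphic_on ball 0 \<rho>"
    unfolding f_def
    by (intro holomorphic_intros nr)
  have "f holomorphic_on cball 0 1"
    using holomorphic_on_subset[OF hol, of "cball 0 1"] \<rho>1 by (simp add: subset_iff)
  from Cauchy_integral_circlepath_simple[OF this, of 0]
  have "((\<lambda>u. f u / (u - 0)) has_contour_integral 2 * of_real pi * \<i> * f 0) (part_circlepath 0 1 0 (2*pi))"
    by (simp add: circlepath_def)
  hence "((\<lambda>t. f (0 + of_real 1 * cis t) / (of_real 1 * cis t - 0) * of_real 1 * \<i> * cis t) has_integral 0) {0..2*pi}"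
    using has_contour_integral_part_circlepath_iff[of 0 "2*pi" "\<lambda>u. f u / (u - 0)" 0 0 1] pi_gt_zero
    by (simp add: f_def)
  hence "((\<lambda>t. \<i> * f (cis t)) has_integral 0) {0..2*pi}"
    by (rule has_integral_eq[rotated]) (simp add: field_simps cis_neq_zero)
  hence "((\<lambda>t. (- \<i>) * (\<i> * f (cis t))) has_integral (- \<i>) * 0) {0..2*pi}"
    by (rule has_integral_mult_right)
  hence "((\<lambda>t. f (cis t)) has_integral 0) {0..2*pi}" by simp
  from has_integral_linear[OF this bounded_linear_Re]
  have "((\<lambda>t. Re (f (cis t))) has_integral 0) {0..2*pi}" by (simp add: o_def)
  moreover have "Re (f (cis t)) = ln (norm (1 + c * cis t))" for t
  proof -
    have "cis t \<in> ball 0 \<rho>" using \<rho>1 by simp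
    hence "Re (1 + c * cis t) > 0" by (rule re)
    hence "1 + c * cis t \<noteq> 0" by (metis less_irrefl zero_complex.sel(1))
    thus ?thesis by (simp add: f_def)
  qed
  ultimately show ?thesis by simp
qed

lemma jensen_circle:
  fixes a b :: complex assumes ab: "norm b < norm a"
  shows "((\<lambda>t. ln (norm (a + b * cis t))) has_integral (2*pi*ln (norm a))) {0..2*pi}"
proof -
  have a0: "a \<noteq> 0" using ab by auto
  have "norm (b / a) < 1" using ab a0 by (simp add: norm_divide)
  from jensen_unit[OF this]
  have h1: "((\<lambda>t. ln (norm (1 + b / a * cis t))) has_integral 0) {0..2*pi}" .
  have h2: "((\<lambda>t. ln (norm a)) has_integral (2*pi*ln (norm a))) {0..2*pi}"
    using has_integral_const_real[of "ln (norm a)" 0 "2*pi"] pi_gt_zero by simp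
  have eq: "ln (norm (a + b * cis t)) = ln (norm a) + ln (norm (1 + b / a * cis t))" for t
  proof -
    have "norm (b / a * cis t) < 1" using \<open>norm (b/a) < 1\<close> by (simp add: norm_mult norm_divide)
    hence nz: "1 + b / a * cis t \<noteq> 0"
      by (metis add.commute add_eq_0_iff norm_minus_cancel norm_one order_less_irrefl)
    have "a + b * cis t = a * (1 + b / a * cis t)" using a0 by (simp add: field_simps)
    hence "norm (a + b * cis t) = norm a * norm (1 + b / a * cis t)" by (simp add: norm_mult)
    thus ?thesis using a0 nz by (simp add: ln_mult)
  qed
  show ?thesis using has_integral_add[OF h2 h1] by (simp add: eq)
qed

locale eqm =
  fixes K :: "complex set" and \<mu> :: "complex measure" and V :: real
  assumes K: "compact K"
  and sets_mu[measurable_cong]: "sets \<mu> = sets borel"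
  and prob: "prob_space \<mu>"
  and null: "emeasure \<mu> (UNIV - K) = 0"
  and ae_diag: "AE p in \<mu> \<Otimes>\<^sub>M \<mu>. fst p \<noteq> snd p"
  and int_k: "integrable (\<mu> \<Otimes>\<^sub>M \<mu>) (\<lambda>p. - ln (cmod (fst p - snd p)))"
  and V_def: "V = (\<integral>p. - ln (cmod (fst p - snd p)) \<partial>(\<mu> \<Otimes>\<^sub>M \<mu>))"
  and minimal: "\<And>\<nu>. prob_on K \<nu> \<Longrightarrow> ereal V \<le> log_energy \<nu>"

sublocale eqm \<subseteq> P: prob_space \<mu> by (rule prob)
sublocale eqm \<subseteq> PP: pair_prob_space \<mu> \<mu> by (simp add: pair_prob_space_def pair_sigma_finite_def prob P.sigma_finite_measure_axioms)

context eqm begin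

lemma space_mu[simp]: "space \<mu> = UNIV"
  using sets_eq_imp_space_eq[OF sets_mu] by simp

lemma meas_k[measurable]: "(\<lambda>p. - ln (cmod (fst p - snd p))) \<in> borel_measurable (\<mu> \<Otimes>\<^sub>M \<mu>)"
  by measurable

lemma AE_K: "AE z in \<mu>. z \<in> K"
proof -
  have "{z \<in> space \<mu>. \<not> z \<in> K} = UNIV - K" by auto
  moreover have "open (UNIV - K)" using compact_imp_closed[OF K] by (simp add: open_Diff)
  hence "UNIV - K \<in> sets \<mu>" by (simp add: sets_mu)
  moreover
  ultimately show ?thesis using AE_iff_measurable[of "UNIV - K" \<mu> "\<lambda>z. z \<in> K"] null by simp
qed

definition U :: "complex \<Rightarrow> real" where
  "U x = (\<integral>y. - ln (cmod (x - y)) \<partial>\<mu>)"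

lemma U_meas[measurable]: "U \<in> borel_measurable borel"
  unfolding U_def
  by (rule P.borel_measurable_lebesgue_integral) measurable

lemma U_int: "integrable \<mu> U"
  using PP.integrable_fst'[OF int_k] unfolding U_def by (simp only: fst_conv snd_conv)

lemma U_integral: "(\<integral>x. U x \<partial>\<mu>) = V"
  using PP.integral_fst'[OF int_k] unfolding U_def V_def by (simp only: fst_conv snd_conv)

lemma AE_int_U: "AE x in \<mu>. integrable \<mu> (\<lambda>y. - ln (cmod (x - y)))"
  using PP.AE_integrable_fst'[OF int_k] by (simp only: fst_conv snd_conv)

lemma atomless: "emeasure \<mu> {a} = 0"
proof -
  define N where "N = {p \<in> space (\<mu> \<Otimes>\<^sub>M \<mu>). \<not> fst p \<noteq> snd p}"
  have "N = {p. fst p = snd p}" by (auto simp: N_def space_pair_measure)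
  moreover have "closed {p::complex\<times>complex. fst p = snd p}"
    by (intro closed_Collect_eq continuous_intros)
  hence "{p::complex\<times>complex. fst p = snd p} \<in> sets (borel \<Otimes>\<^sub>M borel)"
    unfolding borel_prod by (rule borel_closed)
  ultimately have Ns: "N \<in> sets (\<mu> \<Otimes>\<^sub>M \<mu>)" by simp
  have "emeasure (\<mu> \<Otimes>\<^sub>M \<mu>) N = 0"
    using AE_iff_measurable[OF Ns N_def[symmetric]] ae_diag by simp
  moreover have "{a} \<times> {a} \<subseteq> N" by (auto simp: N_def space_pair_measure)
  ultimately have "emeasure (\<mu> \<Otimes>\<^sub>M \<mu>) ({a} \<times> {a}) = 0"
    using emeasure_mono[of "{a} \<times> {a}" N "\<mu> \<Otimes>\<^sub>M \<mu>"] Ns by (metis le_zero_eq)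
  hence "emeasure \<mu> {a} * emeasure \<mu> {a} = 0"
    using P.emeasure_pair_measure_Times[of "{a}" \<mu> "{a}"] by (simp add: sets_mu)
  thus ?thesis by simp
qed

end

context eqm begin

lemma prob_UNIV[simp]: "measure \<mu> UNIV = 1"
  using P.prob_space by simp

lemma variational: "AE x in \<mu>. V \<le> U x"
proof -
  define E where "E = {x. U x < V}"
  have E[measurable]: "E \<in> sets borel" unfolding E_def by measurable
  define p where "p = measure \<mu> E"
  have p01: "0 \<le> p" "p \<le> 1" by (auto simp: p_def)
  define g where "g x = indicator E x - p" for x :: complex
  have g_meas[measurable]: "g \<in> borel_measurable borel" unfolding g_def by measurable
  have g_bd: "\<bar>g x\<bar> \<le> 1" for x using p01 by (auto simp: g_def indicator_def)
  define k where "k = (\<lambda>q::complex\<times>complex. - ln (cmod (fst q - snd q)))"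
  have k_meas[measurable]: "k \<in> borel_measurable (\<mu> \<Otimes>\<^sub>M \<mu>)" unfolding k_def by measurable
  have int_k': "integrable (\<mu> \<Otimes>\<^sub>M \<mu>) k" using int_k by (simp add: k_def)
  have intA: "integrable (\<mu> \<Otimes>\<^sub>M \<mu>) (\<lambda>q. g (fst q) * k q)"
    by (rule Bochner_Integration.integrable_bound[OF int_k']) (auto intro!: mult_left_le_one_le simp: abs_mult g_bd)
  have intB: "integrable (\<mu> \<Otimes>\<^sub>M \<mu>) (\<lambda>q. g (snd q) * k q)"
    by (rule Bochner_Integration.integrable_bound[OF int_k']) (auto intro!: mult_left_le_one_le simp: abs_mult g_bd)
  have intC: "integrable (\<mu> \<Otimes>\<^sub>M \<mu>) (\<lambda>q. (g (fst q) * g (snd q)) * k q)"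
    by (rule Bochner_Integration.integrable_bound[OF int_k']) (auto intro!: mult_left_le_one_le simp: abs_mult g_bd mult_le_one)
  define A where "A = (\<integral>q. g (fst q) * k q \<partial>(\<mu> \<Otimes>\<^sub>M \<mu>))"
  define B where "B = (\<integral>q. g (snd q) * k q \<partial>(\<mu> \<Otimes>\<^sub>M \<mu>))"
  define C where "C = (\<integral>q. (g (fst q) * g (snd q)) * k q \<partial>(\<mu> \<Otimes>\<^sub>M \<mu>))"
  have intE: "integral\<^sup>L \<mu> (indicator E :: complex \<Rightarrow> real) = p" by (simp add: p_def)
  have intInd: "integrable \<mu> (indicator E :: complex \<Rightarrow> real)"
    by (intro integrable_real_indicator) (auto simp: sets_mu top.not_eq_extremum[symmetric] P.emeasure_finite)
  have intg: "integral\<^sup>L \<mu> g = 0"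
    unfolding g_def using intE intInd by (simp add: Bochner_Integration.integral_diff)
  have int_g: "integrable \<mu> g" unfolding g_def using intInd by simp
  have energy: "V \<le> V + t * (A + B) + t^2 * C" if t: "0 < t" "t \<le> 1" for t
  proof -
    define f where "f x = 1 + t * g x" for x
    have f_meas[measurable]: "f \<in> borel_measurable borel" unfolding f_def by measurable
    have f_nn: "0 \<le> f x" for x
    proof -
      have "- 1 \<le> g x" using g_bd[of x] by simp
      hence "- t \<le> t * g x" using t by (metis mult_left_mono mult_minus1_right less_imp_le)
      thus ?thesis using t by (simp add: f_def)
    qed
    define \<nu> where "\<nu> = density \<mu> (\<lambda>x. ennreal (f x))"
    have sets_nu[measurable_cong]: "sets \<nu> = sets borel" by (simp add: \<nu>_def sets_mu)
    have int_f: "integrable \<mu> f" unfolding f_def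
      by (intro Bochner_Integration.integrable_add integrable_mult_right) (auto simp: g_def intInd)
    have intf1: "integral\<^sup>L \<mu> f = 1"
      unfolding f_def using intg int_g by (simp add: Bochner_Integration.integral_add)
    have "emeasure \<nu> (space \<nu>) = 1"
    proof -
      have "emeasure \<nu> (space \<nu>) = (\<integral>\<^sup>+ x. ennreal (f x) * indicator UNIV x \<partial>\<mu>)"
        unfolding \<nu>_def by (subst emeasure_density) (auto simp: sets_mu)
      also have "\<dots> = (\<integral>\<^sup>+ x. ennreal (f x) \<partial>\<mu>)" by simp
      also have "\<dots> = ennreal (integral\<^sup>L \<mu> f)"
        by (rule nn_integral_eq_integral[OF int_f]) (simp add: f_nn)
      finally show ?thesis using intf1 by simp
    qed
    hence prob_nu: "prob_space \<nu>" by (rule prob_spaceI)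
    have "emeasure \<nu> (UNIV - K) = (\<integral>\<^sup>+ x. ennreal (f x) * indicator (UNIV - K) x \<partial>\<mu>)"
      unfolding \<nu>_def
    proof (rule emeasure_density)
      show "UNIV - K \<in> sets \<mu>" using compact_imp_closed[OF K] by (simp add: sets_mu open_Diff)
    qed measurable
    also have "\<dots> = (\<integral>\<^sup>+ x. 0 \<partial>\<mu>)"
      by (rule nn_integral_cong_AE) (use AE_K in \<open>auto elim!: eventually_mono\<close>)
    finally have nullnu: "emeasure \<nu> (UNIV - K) = 0" by simp
    have "prob_on K \<nu>" unfolding prob_on_def using sets_nu prob_nu nullnu by simp
    hence le: "ereal V \<le> log_energy \<nu>" by (rule minimal)
    interpret N: prob_space \<nu> by (rule prob_nu)
    have pair: "\<nu> \<Otimes>\<^sub>M \<nu> = density (\<mu> \<Otimes>\<^sub>M \<mu>) (\<lambda>q. ennreal (f (fst q) * f (snd q)))"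
    proof -
      have "\<nu> \<Otimes>\<^sub>M \<nu> = density (\<mu> \<Otimes>\<^sub>M \<mu>) (\<lambda>(x,y). ennreal (f x) * ennreal (f y))"
        unfolding \<nu>_def
        by (rule pair_measure_density) (auto simp: P.sigma_finite_measure_axioms N.sigma_finite_measure_axioms[unfolded \<nu>_def])
      also have "\<dots> = density (\<mu> \<Otimes>\<^sub>M \<mu>) (\<lambda>q. ennreal (f (fst q) * f (snd q)))"
        by (rule density_cong) (auto simp: ennreal_mult f_nn split: prod.split)
      finally show ?thesis .
    qed
    define h where "h q = f (fst q) * f (snd q)" for q :: "complex \<times> complex"
    have h_meas[measurable]: "h \<in> borel_measurable (\<mu> \<Otimes>\<^sub>M \<mu>)" unfolding h_def by measurable
    have h_nn: "0 \<le> h q" for q by (simp add: h_def f_nn)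
    have pair': "\<nu> \<Otimes>\<^sub>M \<nu> = density (\<mu> \<Otimes>\<^sub>M \<mu>) (\<lambda>q. ennreal (h q))" using pair by (simp add: h_def)
    have hk: "h q * k q = k q + t * (g (fst q) * k q) + t * (g (snd q) * k q) + t^2 * ((g (fst q) * g (snd q)) * k q)" for q
      by (simp add: h_def f_def algebra_simps power2_eq_square)
    have int_hk: "integrable (\<mu> \<Otimes>\<^sub>M \<mu>) (\<lambda>q. h q * k q)"
      unfolding hk by (intro Bochner_Integration.integrable_add integrable_mult_right int_k' intA intB intC)
    have ae: "AE q in \<nu> \<Otimes>\<^sub>M \<nu>. fst q \<noteq> snd q"
      unfolding pair' by (subst AE_density) (auto intro: eventually_mono[OF ae_diag])
    have integ: "integrable (\<nu> \<Otimes>\<^sub>M \<nu>) (\<lambda>p. - ln (cmod (fst p - snd p)))"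
      unfolding pair' using int_hk
      by (subst integrable_density) (auto simp: h_nn k_def)
    have "log_energy \<nu> = ereal (\<integral>p. - ln (cmod (fst p - snd p)) \<partial>(\<nu> \<Otimes>\<^sub>M \<nu>))"
      unfolding log_energy_def using ae integ by simp
    also have "(\<integral>p. - ln (cmod (fst p - snd p)) \<partial>(\<nu> \<Otimes>\<^sub>M \<nu>)) = (\<integral>q. h q * k q \<partial>(\<mu> \<Otimes>\<^sub>M \<mu>))"
      unfolding pair' by (subst integral_density) (auto simp: h_nn k_def)
    also have "\<dots> = V + t * A + t * B + t^2 * C"
    proof -
      have "(\<integral>q. h q * k q \<partial>(\<mu> \<Otimes>\<^sub>M \<mu>)) = (\<integral>q. k q + t * (g (fst q) * k q) + t * (g (snd q) * k q) + t^2 * ((g (fst q) * g (snd q)) * k q) \<partial>(\<mu> \<Otimes>\<^sub>M \<mu>))"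
        by (simp only: hk)
      also have "\<dots> = (\<integral>q. k q \<partial>(\<mu> \<Otimes>\<^sub>M \<mu>)) + t * A + t * B + t^2 * C"
        using int_k' intA intB intC
        by (simp add: A_def B_def C_def Bochner_Integration.integral_add Bochner_Integration.integrable_add)
      also have "(\<integral>q. k q \<partial>(\<mu> \<Otimes>\<^sub>M \<mu>)) = V" by (simp add: V_def k_def)
      finally show ?thesis .
    qed
    finally show ?thesis using le by (simp add: algebra_simps)
  qed
  have AB: "A + B \<ge> 0"
  proof (rule ccontr)
    assume "\<not> A + B \<ge> 0"
    hence neg: "A + B < 0" by simp
    define t where "t = min 1 (- (A + B) / (2 * (\<bar>C\<bar> + 1)))"
    have t0: "0 < t" "t \<le> 1" using neg by (auto simp: t_def)
    have "t * \<bar>C\<bar> \<le> - (A + B) / (2 * (\<bar>C\<bar> + 1)) * (\<bar>C\<bar> + 1)"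
      using t0 by (intro mult_mono) (auto simp: t_def)
    also have "\<dots> = - (A + B) / 2" by (simp add: field_simps)
    finally have tc: "t * \<bar>C\<bar> \<le> - (A + B) / 2" .
    have "t^2 * C \<le> t * (t * \<bar>C\<bar>)" using t0 by (simp add: power2_eq_square mult_left_mono)
    also have "\<dots> \<le> t * (- (A + B) / 2)" using tc t0 by (simp add: mult_left_mono)
    finally have "t * (A + B) + t^2 * C \<le> t * (A + B) / 2" by (simp add: field_simps)
    also have "\<dots> < 0" using t0 neg by (simp add: mult_pos_neg)
    finally show False using energy[OF t0] by simp
  qed
  have AeqB: "A = B"
  proof -
    have "B = (\<integral>(x,y). (\<lambda>q. g (fst q) * k q) (y,x) \<partial>(\<mu> \<Otimes>\<^sub>M \<mu>))"
      unfolding B_def by (rule Bochner_Integration.integral_cong) (auto simp: k_def norm_minus_commute)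
    also have "\<dots> = A" unfolding A_def by (rule PP.integral_product_swap) measurable
    finally show ?thesis by simp
  qed
  have AU: "A = (\<integral>x. g x * U x \<partial>\<mu>)"
    using PP.integral_fst'[OF intA] unfolding A_def U_def k_def by (simp only: fst_conv snd_conv integral_mult_right_zero)
  have intgU: "integrable \<mu> (\<lambda>x. g x * U x)"
    by (rule Bochner_Integration.integrable_bound[OF U_int]) (auto simp: abs_mult g_bd intro!: mult_left_le_one_le)
  have intEU: "integrable \<mu> (\<lambda>x. indicator E x * (V - U x))"
    by (rule Bochner_Integration.integrable_bound[of _ "\<lambda>x. V - U x"]) (auto simp: abs_mult indicator_def U_int)
  have "(\<integral>x. indicator E x * (V - U x) \<partial>\<mu>) = - (\<integral>x. g x * U x \<partial>\<mu>)"
  proof -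
    have "(\<lambda>x. indicator E x * (V - U x)) = (\<lambda>x. V * indicator E x - (p * U x + g x * U x))"
      by (auto simp: g_def algebra_simps)
    hence "(\<integral>x. indicator E x * (V - U x) \<partial>\<mu>) = V * p - (p * V + (\<integral>x. g x * U x \<partial>\<mu>))"
      using intE U_integral U_int intgU intInd
      by (simp add: Bochner_Integration.integral_diff Bochner_Integration.integral_add Bochner_Integration.integrable_add)
    thus ?thesis by simp
  qed
  also have "\<dots> \<le> 0" using AB AeqB AU by simp
  finally have le0: "(\<integral>x. indicator E x * (V - U x) \<partial>\<mu>) \<le> 0" .
  have nn: "AE x in \<mu>. 0 \<le> indicator E x * (V - U x)" by (auto simp: indicator_def E_def)
  hence "(\<integral>x. indicator E x * (V - U x) \<partial>\<mu>) = 0" using le0 integral_nonneg_AE[OF nn] by simp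
  hence "AE x in \<mu>. indicator E x * (V - U x) = 0"
    using integral_nonneg_eq_0_iff_AE[OF intEU nn] by simp
  thus ?thesis by (rule eventually_mono) (auto simp: indicator_def E_def)
qed

lemma AE_U_eq: "AE x in \<mu>. U x = V"
proof -
  have int: "integrable \<mu> (\<lambda>x. U x - V)" using U_int by simp
  have nn: "AE x in \<mu>. 0 \<le> U x - V" using variational by (auto elim: eventually_mono)
  have "(\<integral>x. U x - V \<partial>\<mu>) = 0" using U_integral U_int P.prob_space by (simp add: Bochner_Integration.integral_diff)
  hence "AE x in \<mu>. U x - V = 0" using integral_nonneg_eq_0_iff_AE[OF int nn] by simp
  thus ?thesis by (auto elim: eventually_mono)
qed

end

lemma ln_abs_bound:
  fixes a b x :: real assumes "0 < a" "a \<le> x" "x \<le> b"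
  shows "\<bar>ln x\<bar> \<le> \<bar>ln a\<bar> + \<bar>ln b\<bar>"
proof -
  have "ln a \<le> ln x" using assms by simp
  moreover have "ln x \<le> ln b" using assms by simp
  ultimately show ?thesis by linarith
qed

lemma ln_lipschitz:
  fixes a b d :: real assumes "0 < d" "d \<le> a" "d \<le> b"
  shows "\<bar>ln a - ln b\<bar> \<le> \<bar>a - b\<bar> / d"
proof -
  have gen: "ln x - ln y \<le> \<bar>x - y\<bar> / d" if "d \<le> x" "d \<le> y" for x y
  proof -
    have "ln x - ln y = ln (x / y)" using that assms by (simp add: ln_div)
    also have "\<dots> \<le> x / y - 1" using that assms by (intro ln_le_minus_one) simp
    also have "\<dots> = (x - y) / y" using that assms by (simp add: field_simps)
    also have "\<dots> \<le> \<bar>x - y\<bar> / y" using that assms by (intro divide_right_mono) auto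
    also have "\<dots> \<le> \<bar>x - y\<bar> / d" using that assms by (intro divide_left_mono) auto
    finally show ?thesis .
  qed
  show ?thesis using gen[of a b] gen[of b a] assms by (simp add: abs_minus_commute)
qed

context eqm begin

lemma K_bound: obtains Rk where "Rk > 0" "\<And>z. z \<in> K \<Longrightarrow> cmod z \<le> Rk"
  using compact_imp_bounded[OF K] by (auto simp: bounded_pos)

definition G :: "complex set" where
  "G = {x \<in> K. U x \<le> V \<and> integrable \<mu> (\<lambda>y. - ln (cmod (x - y)))}"

lemma G_sub_K: "G \<subseteq> K" by (auto simp: G_def)

lemma AE_G: "AE x in \<mu>. x \<in> G"
  using AE_K AE_U_eq AE_int_U by eventually_elim (auto simp: G_def)

lemma G_ne: "G \<noteq> {}"
proof
  assume "G = {}"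
  hence "AE x in \<mu>. False" using AE_G by simp
  thus False by simp
qed

lemma AE_ne: "AE y in \<mu>. y \<noteq> w"
proof -
  have "{w} \<in> null_sets \<mu>" using atomless[of w] by (auto simp: null_sets_def sets_mu)
  from AE_not_in[OF this] show ?thesis by simp
qed

lemma kern_meas[measurable]: "(\<lambda>y. - ln (cmod (w - y))) \<in> borel_measurable \<mu>"
  by measurable

lemma far_integrable:
  assumes "w \<notin> closure G"
  shows "integrable \<mu> (\<lambda>y. - ln (cmod (w - y)))"
proof -
  obtain Rk where Rk: "Rk > 0" "\<And>z. z \<in> K \<Longrightarrow> cmod z \<le> Rk" using K_bound by blast
  define d where "d = infdist w G"
  have d0: "d > 0" using assms G_ne in_closure_iff_infdist_zero[OF G_ne, of w] infdist_nonneg[of w G]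
    by (auto simp: d_def)
  have "AE y in \<mu>. norm (- ln (cmod (w - y))) \<le> \<bar>ln d\<bar> + \<bar>ln (cmod w + Rk)\<bar>"
    using AE_G
  proof eventually_elim
    case (elim y)
    have "d \<le> cmod (w - y)" using infdist_le[OF elim] by (simp add: d_def dist_norm)
    moreover have "cmod (w - y) \<le> cmod w + Rk"
      using norm_triangle_ineq4[of w y] Rk(2)[of y] elim G_sub_K by auto
    ultimately show ?case using ln_abs_bound[OF d0] by simp
  qed
  thus ?thesis by (rule P.integrable_const_bound) measurable
qed

lemma U_lipschitz:
  assumes d: "d > 0" "infdist w G \<ge> d" "infdist w' G \<ge> d"
  shows "\<bar>U w - U w'\<bar> \<le> dist w w' / d"
proof -
  have nw: "w \<notin> closure G" "w' \<notin> closure G"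
    using d in_closure_iff_infdist_zero[OF G_ne] by auto
  have i1: "integrable \<mu> (\<lambda>y. - ln (cmod (w - y)))" by (rule far_integrable[OF nw(1)])
  have i2: "integrable \<mu> (\<lambda>y. - ln (cmod (w' - y)))" by (rule far_integrable[OF nw(2)])
  have diff: "U w - U w' = (\<integral>y. ln (cmod (w' - y)) - ln (cmod (w - y)) \<partial>\<mu>)"
    unfolding U_def using i1 i2 by (simp add: Bochner_Integration.integral_diff)
  have intd: "integrable \<mu> (\<lambda>y. ln (cmod (w' - y)) - ln (cmod (w - y)))" using i1 i2 by simp
  have bd: "AE y in \<mu>. \<bar>ln (cmod (w' - y)) - ln (cmod (w - y))\<bar> \<le> dist w w' / d"
    using AE_G
  proof eventually_elim
    case (elim y)
    have a: "d \<le> cmod (w - y)" using infdist_le[OF elim, of w] d by (simp add: dist_norm)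
    have b: "d \<le> cmod (w' - y)" using infdist_le[OF elim, of w'] d by (simp add: dist_norm)
    have "\<bar>ln (cmod (w' - y)) - ln (cmod (w - y))\<bar> \<le> \<bar>cmod (w' - y) - cmod (w - y)\<bar> / d"
      by (rule ln_lipschitz[OF d(1) b a])
    also have "\<bar>cmod (w' - y) - cmod (w - y)\<bar> \<le> dist w w'"
      using norm_triangle_ineq3[of "w' - y" "w - y"] by (simp add: dist_norm norm_minus_commute)
    hence "\<bar>cmod (w' - y) - cmod (w - y)\<bar> / d \<le> dist w w' / d" using d by (simp add: divide_right_mono)
    finally show ?case .
  qed
  have "(\<integral>y. ln (cmod (w' - y)) - ln (cmod (w - y)) \<partial>\<mu>) \<le> dist w w' / d"
    by (rule P.integral_le_const[OF intd]) (use bd in \<open>auto elim: eventually_mono\<close>)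
  moreover have "- (\<integral>y. ln (cmod (w' - y)) - ln (cmod (w - y)) \<partial>\<mu>) \<le> dist w w' / d"
  proof -
    have "(\<integral>y. - (ln (cmod (w' - y)) - ln (cmod (w - y))) \<partial>\<mu>) \<le> dist w w' / d"
      by (rule P.integral_le_const) (use i1 i2 bd in \<open>auto elim: eventually_mono\<close>)
    thus ?thesis by (simp only: Bochner_Integration.integral_minus)
  qed
  ultimately show ?thesis using diff by linarith
qed

lemma U_continuous_on:
  assumes "d > 0" shows "continuous_on {w. infdist w G \<ge> d} U"
proof -
  have "lipschitz_on (1/d) {w. infdist w G \<ge> d} U"
    unfolding lipschitz_on_def using U_lipschitz[OF assms] assms
    by (auto simp: dist_real_def)
  thus ?thesis by (rule lipschitz_on_continuous_on)
qed

end

lemma ln_diff_le: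
  fixes a b :: real assumes "0 < a" "0 < b"
  shows "ln a - ln b \<le> (a - b) / b"
proof -
  have "ln a - ln b = ln (a / b)" using assms by (simp add: ln_div)
  also have "\<dots> \<le> a / b - 1" using assms by (intro ln_le_minus_one) simp
  also have "\<dots> = (a - b) / b" using assms by (simp add: field_simps)
  finally show ?thesis .
qed

context eqm begin

lemma closure_G:
  assumes w: "w \<in> closure G"
  shows "integrable \<mu> (\<lambda>y. - ln (cmod (w - y)))" "U w \<le> V"
proof -
  obtain Rk where Rk: "Rk > 0" "\<And>z. z \<in> K \<Longrightarrow> cmod z \<le> Rk" using K_bound by blast
  have wK: "w \<in> K" using w closure_minimal[OF G_sub_K compact_imp_closed[OF K]] by auto
  obtain \<zeta> where \<zeta>: "\<And>n. \<zeta> n \<in> G" "\<zeta> \<longlonglongrightarrow> w" using w closure_sequential by blast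
  define D where "D = 2 * Rk + 1"
  have D1: "1 \<le> D" using Rk by (simp add: D_def)
  have kD: "0 \<le> - ln (cmod (a - y)) + ln D" if "a \<in> K" "y \<in> K" for a y
  proof (cases "a = y")
    case True thus ?thesis using D1 by simp
  next
    case False
    have "cmod (a - y) \<le> cmod a + cmod y" by (rule norm_triangle_ineq4)
    also have "\<dots> \<le> D" using Rk(2)[OF that(1)] Rk(2)[OF that(2)] by (simp add: D_def)
    finally have "ln (cmod (a - y)) \<le> ln D" using False by (intro ln_mono) auto
    thus ?thesis by simp
  qed
  define u where "u n y = ennreal (- ln (cmod (\<zeta> n - y)) + ln D)" for n y
  have u_meas[measurable]: "u n \<in> borel_measurable \<mu>" for n unfolding u_def by measurable
  have int_n: "integrable \<mu> (\<lambda>y. - ln (cmod (\<zeta> n - y)))" for n using \<zeta>(1)[of n] by (auto simp: G_def)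
  have nonneg_n: "AE y in \<mu>. 0 \<le> - ln (cmod (\<zeta> n - y)) + ln D" for n
    using AE_K by eventually_elim (use kD \<zeta>(1) G_sub_K in blast)
  have int_n': "integrable \<mu> (\<lambda>y. - ln (cmod (\<zeta> n - y)) + ln D)" for n using int_n[of n] by simp
  have val_n: "(\<integral>y. - ln (cmod (\<zeta> n - y)) + ln D \<partial>\<mu>) = U (\<zeta> n) + ln D" for n
    using int_n[of n] by (simp add: U_def Bochner_Integration.integral_add)
  have nn_n: "(\<integral>\<^sup>+y. u n y \<partial>\<mu>) = ennreal (U (\<zeta> n) + ln D)" for n
    unfolding u_def using nn_integral_eq_integral[OF int_n' nonneg_n] val_n by simp
  have UV: "U (\<zeta> n) \<le> V" for n using \<zeta>(1)[of n] by (auto simp: G_def)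
  have le_n: "(\<integral>\<^sup>+y. u n y \<partial>\<mu>) \<le> ennreal (V + ln D)" for n
    unfolding nn_n using UV[of n] by (intro ennreal_leI) simp
  have pos0: "0 \<le> U (\<zeta> 0) + ln D"
    using integral_nonneg_AE[OF nonneg_n[of 0]] val_n[of 0] by simp
  have VD: "0 \<le> V + ln D" using pos0 UV[of 0] by simp
  have fatou: "(\<integral>\<^sup>+y. liminf (\<lambda>n. u n y) \<partial>\<mu>) \<le> liminf (\<lambda>n. \<integral>\<^sup>+y. u n y \<partial>\<mu>)"
    by (rule nn_integral_liminf) simp
  have "liminf (\<lambda>n. \<integral>\<^sup>+y. u n y \<partial>\<mu>) \<le> limsup (\<lambda>n. \<integral>\<^sup>+y. u n y \<partial>\<mu>)"
    by (rule Liminf_le_Limsup) simp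
  also have "\<dots> \<le> ennreal (V + ln D)"
    by (rule Limsup_bounded) (use le_n in auto)
  finally have lim_le: "liminf (\<lambda>n. \<integral>\<^sup>+y. u n y \<partial>\<mu>) \<le> ennreal (V + ln D)" .
  define f where "f y = - ln (cmod (w - y)) + ln D" for y
  have f_meas[measurable]: "f \<in> borel_measurable \<mu>" unfolding f_def by measurable
  have liminf_eq: "AE y in \<mu>. liminf (\<lambda>n. u n y) = ennreal (f y)"
    using AE_ne[of w]
  proof eventually_elim
    case (elim y)
    have "(\<lambda>n. - ln (cmod (\<zeta> n - y)) + ln D) \<longlonglongrightarrow> - ln (cmod (w - y)) + ln D"
      using elim by (intro tendsto_intros \<zeta>(2)) simp
    hence "(\<lambda>n. u n y) \<longlonglongrightarrow> ennreal (f y)" unfolding u_def f_def by (rule tendsto_ennrealI)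
    thus ?case by (intro lim_imp_Liminf) simp_all
  qed
  have nnf: "(\<integral>\<^sup>+y. ennreal (f y) \<partial>\<mu>) \<le> ennreal (V + ln D)"
  proof -
    have "(\<integral>\<^sup>+y. ennreal (f y) \<partial>\<mu>) = (\<integral>\<^sup>+y. liminf (\<lambda>n. u n y) \<partial>\<mu>)"
      by (rule nn_integral_cong_AE) (use liminf_eq in \<open>auto elim: eventually_mono\<close>)
    thus ?thesis using fatou lim_le by simp
  qed
  have f_nn: "AE y in \<mu>. 0 \<le> f y"
    using AE_K by eventually_elim (use kD wK in \<open>auto simp: f_def\<close>)
  have int_f: "integrable \<mu> f"
    by (rule integrableI_nonneg[OF f_meas f_nn]) (use nnf in \<open>auto intro: le_less_trans[OF _ ennreal_less_top]\<close>)
  have "integrable \<mu> (\<lambda>y. f y - ln D)" using int_f by simp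
  thus int_w: "integrable \<mu> (\<lambda>y. - ln (cmod (w - y)))" by (simp add: f_def)
  have "ennreal (integral\<^sup>L \<mu> f) \<le> ennreal (V + ln D)"
    using nnf nn_integral_eq_integral[OF int_f f_nn] by simp
  hence "integral\<^sup>L \<mu> f \<le> V + ln D" using VD by (simp add: ennreal_le_iff)
  moreover have "integral\<^sup>L \<mu> f = U w + ln D"
    using int_w unfolding f_def[abs_def] by (simp add: U_def Bochner_Integration.integral_add)
  ultimately show "U w \<le> V" by simp
qed

lemma measure_null_K: "measure \<mu> (UNIV - K) = 0"
  using null by (simp add: measure_def)

lemma ball_sets[simp]: "ball z r \<in> sets \<mu>" by (simp add: sets_mu)

lemma small_balls:
  assumes c: "c > 0" shows "\<exists>\<rho>>0. \<forall>z. measure \<mu> (ball z \<rho>) < c"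
proof (rule ccontr)
  assume "\<not> ?thesis"
  hence "\<forall>n::nat. \<exists>z. c \<le> measure \<mu> (ball z (1 / Suc n))"
    by (metis not_less of_nat_0_less_iff zero_less_Suc zero_less_divide_1_iff)
  then obtain z where z: "\<And>n. c \<le> measure \<mu> (ball (z n) (1 / Suc n))" by metis
  have "\<exists>y. y \<in> K \<and> dist (z n) y < 1 / Suc n" for n
  proof (rule ccontr)
    assume "\<not> ?thesis"
    hence "ball (z n) (1 / Suc n) \<subseteq> UNIV - K" by auto
    hence "measure \<mu> (ball (z n) (1 / Suc n)) \<le> measure \<mu> (UNIV - K)"
      using compact_imp_closed[OF K] by (intro P.finite_measure_mono) (auto simp: sets_mu open_Diff)
    thus False using z[of n] c measure_null_K by simp
  qed
  then obtain y where y: "\<And>n. y n \<in> K" "\<And>n. dist (z n) (y n) < 1 / Suc n" by metis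
  have yb: "c \<le> measure \<mu> (ball (y n) (2 / Suc n))" for n
  proof -
    have "ball (z n) (1 / Suc n) \<subseteq> ball (y n) (2 / Suc n)"
    proof
      fix x assume "x \<in> ball (z n) (1 / Suc n)"
      hence "dist (y n) x < 2 / Suc n"
        using y(2)[of n] dist_triangle[of "y n" x "z n"] by (simp add: dist_commute)
      thus "x \<in> ball (y n) (2 / Suc n)" by simp
    qed
    hence "measure \<mu> (ball (z n) (1 / Suc n)) \<le> measure \<mu> (ball (y n) (2 / Suc n))"
      by (intro P.finite_measure_mono) auto
    thus ?thesis using z[of n] by simp
  qed
  obtain l r where lr: "l \<in> K" "strict_mono r" "(y \<circ> r) \<longlonglongrightarrow> l"
    using seq_compactE[OF compact_imp_seq_compact[OF K], of y] y(1) by blast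
  have lb: "c \<le> measure \<mu> (ball l (1 / Suc m))" for m
  proof -
    have e1: "eventually (\<lambda>n. dist (y (r n)) l < 1 / (2 * Suc m)) sequentially"
      using lr(3) unfolding o_def by (rule tendstoD) simp
    have e2: "eventually (\<lambda>n. 2 / Suc (r n) < 1 / (2 * Suc m)) sequentially"
      unfolding eventually_sequentially
    proof (intro exI allI impI)
      fix n assume n: "4 * Suc m \<le> n"
      have "n \<le> r n" using seq_suble[OF lr(2)] by simp
      hence "real (4 * Suc m) < real (Suc (r n))" using n by linarith
      hence "2 / real (Suc (r n)) < 2 / real (4 * Suc m)"
        by (intro divide_strict_left_mono) auto
      also have "\<dots> = 1 / (2 * Suc m)" by (simp add: field_simps)
      finally show "2 / real (Suc (r n)) < 1 / real (2 * Suc m)" by simp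
    qed
    obtain n where n: "dist (y (r n)) l < 1 / (2 * Suc m)" "2 / Suc (r n) < 1 / (2 * Suc m)"
      using eventually_happens'[OF _ eventually_conj[OF e1 e2]] by auto
    have "ball (y (r n)) (2 / Suc (r n)) \<subseteq> ball l (1 / Suc m)"
    proof
      fix x assume "x \<in> ball (y (r n)) (2 / Suc (r n))"
      hence "dist l x < 1 / (2 * Suc m) + 1 / (2 * Suc m)"
        using n dist_triangle[of l x "y (r n)"] by (simp add: dist_commute)
      moreover have "1 / real (2 * Suc m) + 1 / real (2 * Suc m) = 1 / real (Suc m)"
        by (simp add: field_simps)
      ultimately show "x \<in> ball l (1 / Suc m)" by simp
    qed
    hence "measure \<mu> (ball (y (r n)) (2 / Suc (r n))) \<le> measure \<mu> (ball l (1 / Suc m))"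
      by (intro P.finite_measure_mono) auto
    thus ?thesis using yb[of "r n"] by simp
  qed
  have dec: "decseq (\<lambda>m. ball l (1 / real (Suc m)))"
    unfolding decseq_def
  proof (intro allI impI)
    fix m n :: nat assume "m \<le> n"
    hence "1 / real (Suc n) \<le> 1 / real (Suc m)" by (intro divide_left_mono) auto
    thus "ball l (1 / real (Suc n)) \<subseteq> ball l (1 / real (Suc m))" by auto
  qed
  have lim: "(\<lambda>m. measure \<mu> (ball l (1 / Suc m))) \<longlonglongrightarrow> measure \<mu> (\<Inter>m. ball l (1 / Suc m))"
    by (rule P.finite_Lim_measure_decseq) (use dec in auto)
  have "(\<Inter>m. ball l (1 / real (Suc m))) = {l}"
  proof (intro equalityI subsetI)
    fix x assume x: "x \<in> (\<Inter>m. ball l (1 / real (Suc m)))"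
    show "x \<in> {l}"
    proof (rule ccontr)
      assume "x \<notin> {l}"
      hence "dist l x > 0" by simp
      then obtain m where "inverse (real (Suc m)) < dist l x" using reals_Archimedean by blast
      moreover have "x \<in> ball l (1 / real (Suc m))" using x by blast
      ultimately show False by (simp add: inverse_eq_divide)
    qed
  qed auto
  hence "c \<le> measure \<mu> {l}" using LIMSEQ_le_const[OF lim] lb by auto
  moreover have "measure \<mu> {l} = 0" using atomless[of l] by (simp add: measure_def)
  ultimately show False using c by simp
qed

lemma near_estimate:
  assumes eta: "\<eta> > 0"
  shows "\<exists>\<delta>>0. \<forall>w. w \<notin> closure G \<longrightarrow> infdist w G \<le> \<delta> \<longrightarrow> U w \<le> V + \<eta>"
proof -
  obtain \<rho> where \<rho>: "\<rho> > 0" "\<And>z. measure \<mu> (ball z \<rho>) < \<eta> / 4"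
    using small_balls[of "\<eta> / 4"] eta by auto
  define \<delta> where "\<delta> = \<rho> * \<eta> / (8 + 4 * \<eta>)"
  have \<delta>0: "\<delta> > 0" using \<rho> eta by (simp add: \<delta>_def)
  have \<delta>\<rho>: "4 * \<delta> \<le> \<rho>" using \<rho> eta by (simp add: \<delta>_def field_simps)
  have \<delta>key: "\<delta> * (4 + 2 * \<eta>) \<le> \<eta> * \<rho>" using \<rho> eta by (simp add: \<delta>_def field_simps)
  show ?thesis
  proof (intro exI[of _ \<delta>] conjI allI impI)
    show "\<delta> > 0" by (rule \<delta>0)
    fix w assume w: "w \<notin> closure G" "infdist w G \<le> \<delta>"
    define s where "s = infdist w G"
    have s0: "s > 0" using w(1) in_closure_iff_infdist_zero[OF G_ne, of w] infdist_nonneg[of w G]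
      by (auto simp: s_def)
    have "(INF a\<in>G. dist w a) < 2 * s" using s0 by (simp add: s_def infdist_notempty[OF G_ne])
    then obtain \<zeta> where \<zeta>: "\<zeta> \<in> G" "dist w \<zeta> < 2 * s"
      using cINF_less_iff[OF G_ne, of "\<lambda>a. dist w a"] by (auto intro: bdd_belowI[of _ 0])
    have int_w: "integrable \<mu> (\<lambda>y. - ln (cmod (w - y)))" by (rule far_integrable[OF w(1)])
    have int_z: "integrable \<mu> (\<lambda>y. - ln (cmod (\<zeta> - y)))" using \<zeta>(1) by (auto simp: G_def)
    define \<phi> where "\<phi> y = 2 * indicator (ball \<zeta> \<rho>) y + \<eta> / 2" for y
    have int_phi: "integrable \<mu> \<phi>" unfolding \<phi>_def
      by (intro Bochner_Integration.integrable_add integrable_mult_right integrable_real_indicator)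
         (auto simp: top.not_eq_extremum[symmetric] P.emeasure_finite)
    have phi_int: "(\<integral>y. \<phi> y \<partial>\<mu>) < \<eta>"
    proof -
      have "(\<integral>y. \<phi> y \<partial>\<mu>) = 2 * measure \<mu> (ball \<zeta> \<rho>) + \<eta> / 2"
        unfolding \<phi>_def
        by (subst Bochner_Integration.integral_add)
           (auto intro!: integrable_real_indicator simp: top.not_eq_extremum[symmetric] P.emeasure_finite)
      thus ?thesis using \<rho>(2)[of \<zeta>] by simp
    qed
    have pt: "AE y in \<mu>. ln (cmod (\<zeta> - y)) - ln (cmod (w - y)) \<le> \<phi> y"
      using AE_G AE_ne[of \<zeta>]
    proof eventually_elim
      case (elim y)
      define a where "a = cmod (\<zeta> - y)"
      define b where "b = cmod (w - y)"
      have a0: "a > 0" using elim by (simp add: a_def)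
      have bs: "s \<le> b" using infdist_le[OF elim(1), of w] by (simp add: s_def b_def dist_norm)
      have b0: "b > 0" using bs s0 by simp
      have ab: "a \<le> b + dist w \<zeta>"
        using norm_triangle_ineq[of "\<zeta> - w" "w - y"] by (simp add: a_def b_def dist_norm norm_minus_commute)
      have lnab: "ln a - ln b \<le> (a - b) / b" by (rule ln_diff_le[OF a0 b0])
      show ?case
      proof (cases "y \<in> ball \<zeta> \<rho>")
        case True
        have "a - b < 2 * b" using ab \<zeta>(2) bs by simp
        hence "(a - b) / b < 2" using b0 by (simp add: field_simps)
        thus ?thesis using lnab True eta by (simp add: \<phi>_def a_def b_def)
      next
        case False
        hence a\<rho>: "\<rho> \<le> a" by (simp add: a_def dist_norm)
        have ds: "dist w \<zeta> < 2 * \<delta>" using \<zeta>(2) w(2) by (simp add: s_def)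
        have b2: "\<rho> - 2 * \<delta> \<le> b" using ab ds a\<rho> by simp
        have pos: "\<rho> - 2 * \<delta> > 0" using \<delta>\<rho> \<delta>0 by simp
        have "(a - b) / b \<le> (2 * \<delta>) / (\<rho> - 2 * \<delta>)"
        proof -
          have "a - b \<le> 2 * \<delta>" using ab ds by simp
          hence "(a - b) / b \<le> (2 * \<delta>) / b" using b0 by (simp add: divide_right_mono)
          also have "\<dots> \<le> (2 * \<delta>) / (\<rho> - 2 * \<delta>)" using b2 pos \<delta>0 by (intro divide_left_mono) auto
          finally show ?thesis .
        qed
        also have "\<dots> \<le> \<eta> / 2" using pos \<delta>key by (simp add: field_simps)
        finally have "ln a - ln b \<le> \<eta> / 2" using lnab by linarith
        thus ?thesis using False by (simp add: \<phi>_def a_def b_def)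
      qed
    qed
    have "U w - U \<zeta> = (\<integral>y. ln (cmod (\<zeta> - y)) - ln (cmod (w - y)) \<partial>\<mu>)"
      unfolding U_def using int_w int_z by (simp add: Bochner_Integration.integral_diff)
    also have "\<dots> \<le> (\<integral>y. \<phi> y \<partial>\<mu>)"
      by (rule integral_mono_AE) (use int_w int_z int_phi pt in auto)
    finally have "U w - U \<zeta> < \<eta>" using phi_int by simp
    moreover have "U \<zeta> \<le> V" using \<zeta>(1) by (simp add: G_def)
    ultimately show "U w \<le> V + \<eta>" by simp
  qed
qed

end

lemma cis_meas[measurable]: "cis \<in> borel_measurable borel"
  by (rule borel_measurable_continuous_onI) (rule continuous_on_cis[OF continuous_on_id, unfolded id_def])

context eqm begin

lemma circle_fubini:
  fixes c :: complex and r B :: real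
  assumes bd: "AE y in \<mu>. \<forall>t. \<bar>ln (cmod (c + of_real r * cis t - y))\<bar> \<le> B"
    and hyp: "AE y in \<mu>. integral {0..2*pi} (\<lambda>t. - ln (cmod (c + of_real r * cis t - y))) = h y"
    and h_meas[measurable]: "h \<in> borel_measurable borel"
  shows "integral {0..2*pi} (\<lambda>t. \<integral>y. - ln (cmod (c + of_real r * cis t - y)) \<partial>\<mu>)
       = (\<integral>y. h y \<partial>\<mu>)"
proof -
  interpret Q: pair_sigma_finite lborel \<mu>
    by (intro pair_sigma_finite.intro sigma_finite_lborel P.sigma_finite_measure_axioms)
  define F where "F t y = indicator {0..2*pi} t * - ln (cmod (c + of_real r * cis t - y))" for t :: real and y :: complex
  have F_meas[measurable]: "case_prod F \<in> borel_measurable (lborel \<Otimes>\<^sub>M \<mu>)" unfolding F_def by measurable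
  have "AE y in \<mu>. 0 \<le> B" using bd by eventually_elim (meson abs_ge_zero order_trans)
  hence B0: "0 \<le> B" by simp
  have Fbd: "AE y in \<mu>. norm (F t y) \<le> B" for t
    using bd by eventually_elim (auto simp: F_def indicator_def)
  have int1: "AE t in lborel. integrable \<mu> (\<lambda>y. F t y)"
    by (intro AE_I2 P.integrable_const_bound[OF Fbd]) measurable
  have int_ind: "integrable lborel (\<lambda>t. B * indicator {0..2*pi} t :: real)"
    by (intro integrable_mult_right integrable_real_indicator) auto
  have int2: "integrable lborel (\<lambda>t. \<integral>y. norm (F t y) \<partial>\<mu>)"
  proof (rule Bochner_Integration.integrable_bound[OF int_ind])
    show "(\<lambda>t. \<integral>y. norm (F t y) \<partial>\<mu>) \<in> borel_measurable lborel"
      by (rule P.borel_measurable_lebesgue_integral) measurable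
    show "AE t in lborel. norm (\<integral>y. norm (F t y) \<partial>\<mu>) \<le> norm (B * indicator {0..2*pi} t)"
    proof (intro AE_I2)
      fix t :: real
      show "norm (\<integral>y. norm (F t y) \<partial>\<mu>) \<le> norm (B * indicator {0..2*pi} t)"
      proof (cases "t \<in> {0..2*pi}")
        case True
        have "(\<integral>y. norm (F t y) \<partial>\<mu>) \<le> B"
          by (rule P.integral_le_const) (use Fbd[of t] in \<open>auto intro!: P.integrable_const_bound[of _ B]\<close>)
        moreover have "0 \<le> (\<integral>y. norm (F t y) \<partial>\<mu>)" by simp
        ultimately show ?thesis using True B0 by simp
      next
        case False thus ?thesis by (simp add: F_def)
      qed
    qed
  qed
  have intF: "integrable (lborel \<Otimes>\<^sub>M \<mu>) (case_prod F)"
    by (rule Q.Fubini_integrable) (use F_meas int2 int1 in auto)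
  define g where "g t = (\<integral>y. - ln (cmod (c + of_real r * cis t - y)) \<partial>\<mu>)" for t
  have Fg: "(\<integral>y. F t y \<partial>\<mu>) = indicator {0..2*pi} t *\<^sub>R g t" for t
    by (simp add: F_def g_def)
  have "integrable lborel (\<lambda>t. \<integral>y. F t y \<partial>\<mu>)" using Q.integrable_fst'[OF intF] by simp
  hence sig: "set_integrable lborel {0..2*pi} g" unfolding set_integrable_def Fg .
  have lhs: "integral {0..2*pi} g = integral\<^sup>L (lborel \<Otimes>\<^sub>M \<mu>) (case_prod F)"
  proof -
    have "integral {0..2*pi} g = (LINT t:{0..2*pi}|lborel. g t)"
      using set_borel_integral_eq_integral(2)[OF sig] by simp
    also have "\<dots> = (\<integral>t. \<integral>y. F t y \<partial>\<mu> \<partial>lborel)"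
      unfolding set_lebesgue_integral_def Fg ..
    also have "\<dots> = integral\<^sup>L (lborel \<Otimes>\<^sub>M \<mu>) (case_prod F)"
      using Q.integral_fst'[OF intF] by simp
    finally show ?thesis .
  qed
  have rhs: "(\<integral>y. h y \<partial>\<mu>)
      = integral\<^sup>L (lborel \<Otimes>\<^sub>M \<mu>) (case_prod F)"
  proof -
    have "(\<integral>y. h y \<partial>\<mu>)
        = (\<integral>y. \<integral>t. F t y \<partial>lborel \<partial>\<mu>)"
    proof (rule integral_cong_AE)
      show "AE y in \<mu>. h y = (\<integral>t. F t y \<partial>lborel)"
        using Q.AE_integrable_snd[OF intF] hyp
      proof eventually_elim
        case (elim y)
        hence "set_integrable lborel {0..2*pi} (\<lambda>t. - ln (cmod (c + of_real r * cis t - y)))"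
          by (simp add: set_integrable_def F_def)
        from set_borel_integral_eq_integral(2)[OF this]
        show ?case using elim(2) by (simp add: set_lebesgue_integral_def F_def)
      qed
      show "(\<lambda>y. \<integral>t. F t y \<partial>lborel) \<in> borel_measurable \<mu>"
        by (rule lborel.borel_measurable_lebesgue_integral) measurable
    qed measurable
    also have "\<dots> = integral\<^sup>L (lborel \<Otimes>\<^sub>M \<mu>) (case_prod F)"
      by (rule Q.integral_snd[OF intF])
    finally show ?thesis .
  qed
  have "(\<lambda>t. \<integral>y. - ln (cmod (c + of_real r * cis t - y)) \<partial>\<mu>) = g" by (simp add: g_def fun_eq_iff)
  thus ?thesis using lhs rhs by simp
qed

lemma U_mean_value:
  assumes r: "0 < r" "r < infdist w G"
  shows "U w = integral {0..2*pi} (\<lambda>t. U (w + of_real r * cis t)) / (2*pi)"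
proof -
  obtain Rk where Rk: "Rk > 0" "\<And>z. z \<in> K \<Longrightarrow> cmod z \<le> Rk" using K_bound by blast
  define d where "d = infdist w G - r"
  have d0: "d > 0" using r by (simp add: d_def)
  have bd: "AE y in \<mu>. \<forall>t. \<bar>ln (cmod (w + of_real r * cis t - y))\<bar> \<le> \<bar>ln d\<bar> + \<bar>ln (cmod w + r + Rk)\<bar>"
    using AE_G
  proof eventually_elim
    case (elim y)
    show ?case
    proof
      fix t
      have wy: "infdist w G \<le> cmod (w - y)" using infdist_le[OF elim, of w] by (simp add: dist_norm)
      have "cmod (w - y) \<le> cmod (w + of_real r * cis t - y) + cmod (of_real r * cis t)"
        using norm_triangle_ineq[of "w + of_real r * cis t - y" "- (of_real r * cis t)"] by simp
      hence lo: "d \<le> cmod (w + of_real r * cis t - y)" using wy r by (simp add: d_def norm_mult)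
      have "cmod (w + of_real r * cis t - y) \<le> cmod w + cmod (of_real r * cis t) + cmod y"
        using norm_triangle_ineq4[of "w + of_real r * cis t" y] norm_triangle_ineq[of w "of_real r * cis t"] by linarith
      also have "\<dots> \<le> cmod w + r + Rk" using Rk(2)[of y] elim G_sub_K r by (auto simp: norm_mult)
      finally show "\<bar>ln (cmod (w + of_real r * cis t - y))\<bar> \<le> \<bar>ln d\<bar> + \<bar>ln (cmod w + r + Rk)\<bar>"
        using ln_abs_bound[OF d0 lo] by simp
    qed
  qed
  have hyp: "AE y in \<mu>. integral {0..2*pi} (\<lambda>t. - ln (cmod (w + of_real r * cis t - y))) = 2 * pi * - ln (cmod (w - y))"
    using AE_G
  proof eventually_elim
    case (elim y)
    have "norm (of_real r :: complex) < norm (w - y)"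
      using infdist_le[OF elim, of w] r by (simp add: dist_norm)
    from has_integral_neg[OF jensen_circle[OF this]]
    have "((\<lambda>t. - ln (cmod (w - y + of_real r * cis t))) has_integral - (2 * pi * ln (cmod (w - y)))) {0..2*pi}" .
    moreover have "(\<lambda>t. - ln (cmod (w - y + of_real r * cis t))) = (\<lambda>t. - ln (cmod (w + of_real r * cis t - y)))"
      by (simp add: algebra_simps)
    ultimately have "((\<lambda>t. - ln (cmod (w + of_real r * cis t - y))) has_integral - (2 * pi * ln (cmod (w - y)))) {0..2*pi}"
      by simp
    from integral_unique[OF this] show ?case by simp
  qed
  have "integral {0..2*pi} (\<lambda>t. U (w + of_real r * cis t)) = (\<integral>y. 2 * pi * - ln (cmod (w - y)) \<partial>\<mu>)"
    unfolding U_def by (rule circle_fubini[OF bd hyp]) measurable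
  also have "\<dots> = 2 * pi * U w" unfolding U_def by simp
  finally show ?thesis by simp
qed

definition R :: real where "R = Sup (cmod ` K)"

lemma R_bound: "y \<in> K \<Longrightarrow> cmod y \<le> R"
proof -
  have "bounded (cmod ` K)" by (intro compact_imp_bounded compact_continuous_image continuous_intros K)
  thus "y \<in> K \<Longrightarrow> cmod y \<le> R" unfolding R_def by (intro cSup_upper) (auto intro: bounded_imp_bdd_above)
qed

lemma R_nonneg: "0 \<le> R"
proof -
  obtain y where "y \<in> G" using G_ne by blast
  hence "y \<in> K" using G_sub_K by auto
  thus ?thesis using R_bound[of y] norm_ge_zero order_trans by blast
qed

lemma infdist_G_ge: "cmod w - R \<le> infdist w G"
  unfolding infdist_notempty[OF G_ne]
proof (rule cINF_greatest[OF G_ne])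
  fix y assume "y \<in> G"
  hence "cmod y \<le> R" using R_bound G_sub_K by auto
  moreover have "cmod w - cmod y \<le> dist w y" using norm_triangle_ineq2[of w y] by (simp add: dist_norm)
  ultimately show "cmod w - R \<le> dist w y" by simp
qed

lemma U_le_V_far:
  assumes w: "w \<notin> closure G" shows "U w \<le> V"
proof (rule field_le_epsilon)
  fix \<eta> :: real assume \<eta>: "0 < \<eta>"
  obtain \<delta> where \<delta>: "\<delta> > 0" "\<And>w. w \<notin> closure G \<Longrightarrow> infdist w G \<le> \<delta> \<Longrightarrow> U w \<le> V + \<eta>"
    using near_estimate[OF \<eta>] by blast
  have nc: "x \<notin> closure G" if "\<delta> \<le> infdist x G" for x
    using that \<delta>(1) in_closure_iff_infdist_zero[OF G_ne, of x] by auto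
  show "U w \<le> V + \<eta>"
  proof (cases "infdist w G \<le> \<delta>")
    case True thus ?thesis using \<delta>(2) w by blast
  next
    case False
    define F where "F = {x. \<delta> \<le> infdist x G}"
    have wF: "w \<in> F" using False by (simp add: F_def)
    have clF: "closed F" unfolding F_def
      by (intro closed_Collect_le continuous_intros)
    have contF: "continuous_on F U" unfolding F_def by (rule U_continuous_on[OF \<delta>(1)])
    show ?thesis
    proof (rule maxp[OF clF contF _ _ wF])
      fix x assume xF: "x \<in> F" and gt: "V + \<eta> < U x"
      have xd: "\<delta> < infdist x G"
      proof (rule ccontr)
        assume "\<not> \<delta> < infdist x G"
        hence "infdist x G \<le> \<delta>" by simp
        hence "U x \<le> V + \<eta>" using \<delta>(2) nc xF by (auto simp: F_def)
        thus False using gt by simp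
      qed
      define r where "r = (infdist x G - \<delta>) / 2"
      have r0: "0 < r" "r < infdist x G" using xd \<delta>(1) by (auto simp: r_def)
      show "\<exists>r::real>0. (\<forall>t. x + of_real r * cis t \<in> F) \<and>
            U x = integral {0..2*pi} (\<lambda>t. U (x + of_real r * cis t)) / (2*pi)"
      proof (intro exI[of _ r] conjI allI)
        show "0 < r" by (rule r0(1))
        fix t
        have "infdist x G \<le> infdist (x + of_real r * cis t) G + dist x (x + of_real r * cis t)"
          by (rule infdist_triangle)
        moreover have "dist x (x + of_real r * cis t) = r" using r0 by (simp add: dist_norm norm_mult)
        moreover have "\<delta> \<le> infdist x G - r" using xd unfolding r_def by (simp add: field_simps)
        ultimately show "x + of_real r * cis t \<in> F" unfolding F_def by simp
      next
        show "U x = integral {0..2*pi} (\<lambda>t. U (x + of_real r * cis t)) / (2*pi)"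
          by (rule U_mean_value[OF r0])
      qed
    next
      fix x assume xF: "x \<in> F" and xB: "R + exp (- (V + \<eta>)) \<le> cmod x"
      have int: "integrable \<mu> (\<lambda>y. - ln (cmod (x - y)))" using far_integrable nc xF by (auto simp: F_def)
      have "AE y in \<mu>. - ln (cmod (x - y)) \<le> V + \<eta>"
        using AE_K
      proof eventually_elim
        case (elim y)
        have "cmod x - cmod y \<le> cmod (x - y)" by (rule norm_triangle_ineq2)
        hence "exp (- (V + \<eta>)) \<le> cmod (x - y)" using R_bound[OF elim] xB by simp
        hence "ln (exp (- (V + \<eta>))) \<le> ln (cmod (x - y))" by (intro ln_mono) auto
        thus ?case by simp
      qed
      thus "U x \<le> V + \<eta>" unfolding U_def by (rule P.integral_le_const[OF int])
    qed
  qed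
qed

lemma U_le_V: "U w \<le> V"
  using U_le_V_far closure_G(2) by (cases "w \<in> closure G") auto

lemma kern_integrable: "integrable \<mu> (\<lambda>y. - ln (cmod (w - y)))"
  using far_integrable closure_G(1) by (cases "w \<in> closure G") auto

end

lemma norm_circle_conj:
  fixes y :: complex and \<rho> t :: real
  shows "cmod (of_real \<rho> + (- cnj y) * cis t) = cmod (0 + of_real \<rho> * cis t - y)"
proof -
  have "of_real \<rho> * cis t - y = cis t * (of_real \<rho> - y * cis (- t))"
    by (simp add: algebra_simps cis_mult)
  hence "cmod (of_real \<rho> * cis t - y) = cmod (of_real \<rho> - y * cis (- t))"
    by (simp add: norm_mult)
  also have "\<dots> = cmod (cnj (of_real \<rho> - y * cis (- t)))" by (simp only: complex_mod_cnj)
  also have "cnj (of_real \<rho> - y * cis (- t)) = of_real \<rho> + (- cnj y) * cis t"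
    by (simp add: cis_cnj)
  finally show ?thesis by simp
qed

context eqm begin

lemma U_circle_cont:
  assumes d: "d > 0" "\<And>t. d \<le> infdist (c + of_real r * cis t) G"
  shows "continuous_on {0..2*pi} (\<lambda>t. U (c + of_real r * cis t))"
  by (rule continuous_on_compose2[OF U_continuous_on[OF d(1)]]) (auto intro!: continuous_intros d(2))

lemma V_lower:
  assumes \<rho>: "R < \<rho>" shows "- ln \<rho> \<le> V"
proof -
  have \<rho>0: "0 < \<rho>" using \<rho> R_nonneg by simp
  have bd: "AE y in \<mu>. \<forall>t. \<bar>ln (cmod (0 + of_real \<rho> * cis t - y))\<bar> \<le> \<bar>ln (\<rho> - R)\<bar> + \<bar>ln (\<rho> + R)\<bar>"
    using AE_K
  proof eventually_elim
    case (elim y)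
    show ?case
    proof
      fix t
      have yR: "cmod y \<le> R" by (rule R_bound[OF elim])
      have "cmod (of_real \<rho> * cis t) - cmod y \<le> cmod (of_real \<rho> * cis t - y)" by (rule norm_triangle_ineq2)
      hence lo: "\<rho> - R \<le> cmod (0 + of_real \<rho> * cis t - y)" using yR \<rho>0 by (simp add: norm_mult)
      have "cmod (of_real \<rho> * cis t - y) \<le> cmod (of_real \<rho> * cis t) + cmod y" by (rule norm_triangle_ineq4)
      hence hi: "cmod (0 + of_real \<rho> * cis t - y) \<le> \<rho> + R" using yR \<rho>0 by (simp add: norm_mult)
      show "\<bar>ln (cmod (0 + of_real \<rho> * cis t - y))\<bar> \<le> \<bar>ln (\<rho> - R)\<bar> + \<bar>ln (\<rho> + R)\<bar>"
        using ln_abs_bound[OF _ lo hi] \<rho> by simp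
    qed
  qed
  have hyp: "AE y in \<mu>. integral {0..2*pi} (\<lambda>t. - ln (cmod (0 + of_real \<rho> * cis t - y))) = 2 * pi * - ln \<rho>"
    using AE_K
  proof eventually_elim
    case (elim y)
    have "norm (- cnj y) < norm (of_real \<rho> :: complex)" using R_bound[OF elim] \<rho> \<rho>0 by simp
    from has_integral_neg[OF jensen_circle[OF this]]
    have "((\<lambda>t. - ln (cmod (0 + of_real \<rho> * cis t - y))) has_integral - (2 * pi * ln \<rho>)) {0..2*pi}"
      using \<rho>0 by (simp only: norm_circle_conj norm_of_real abs_of_pos)
    from integral_unique[OF this] show ?case by simp
  qed
  have "integral {0..2*pi} (\<lambda>t. U (0 + of_real \<rho> * cis t)) = (\<integral>y. 2 * pi * - ln \<rho> \<partial>\<mu>)"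
    unfolding U_def by (rule circle_fubini[OF bd hyp]) simp
  also have "\<dots> = 2 * pi * - ln \<rho>" by simp
  finally have eq: "integral {0..2*pi} (\<lambda>t. U (0 + of_real \<rho> * cis t)) = 2 * pi * - ln \<rho>" .
  have cont: "continuous_on {0..2*pi} (\<lambda>t. U (0 + of_real \<rho> * cis t))"
  proof (rule U_circle_cont)
    show "0 < \<rho> - R" using \<rho> by simp
    fix t show "\<rho> - R \<le> infdist (0 + of_real \<rho> * cis t) G"
      using infdist_G_ge[of "0 + of_real \<rho> * cis t"] \<rho>0 by (simp add: norm_mult)
  qed
  have "integral {0..2*pi} (\<lambda>t. U (0 + of_real \<rho> * cis t)) \<le> integral {0..2*pi} (\<lambda>t. V)"
    by (rule integral_le) (auto intro: integrable_continuous_interval[OF cont] U_le_V simp del: add_0)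
  also have "\<dots> = 2 * pi * V" by simp
  finally have "2 * pi * - ln \<rho> \<le> 2 * pi * V" using eq by simp
  hence "pi * (- ln \<rho>) \<le> pi * V" by simp
  thus ?thesis using mult_le_cancel_left_pos[OF pi_gt_zero] by blast
qed

lemma Cap_le_R: "exp (- V) \<le> R"
proof (rule ccontr)
  assume "\<not> exp (- V) \<le> R"
  hence lt: "R < exp (- V)" by simp
  define \<rho> where "\<rho> = (R + exp (- V)) / 2"
  have "R < \<rho>" "\<rho> < exp (- V)" using lt by (auto simp: \<rho>_def)
  moreover have "0 < \<rho>" using R_nonneg lt by (simp add: \<rho>_def)
  ultimately have "- ln \<rho> \<le> V" "ln \<rho> < ln (exp (- V))" using V_lower
    by (simp, subst ln_less_cancel_iff) auto
  thus False by simp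
qed

lemma R_pos: "0 < R" using Cap_le_R by (meson exp_gt_zero less_le_trans)

lemma far_bound_R':
  assumes R': "R < R'" and a: "R' \<le> cmod a"
  shows "U a + ln (cmod a) \<le> V + ln R'"
proof -
  define c where "c = V + ln R'"
  have R'0: "0 < R'" using R' R_pos by simp
  have c0: "0 < c"
  proof -
    define \<rho> where "\<rho> = (R + R') / 2"
    have "R < \<rho>" "\<rho> < R'" using R' by (auto simp: \<rho>_def)
    hence "- ln \<rho> \<le> V" "ln \<rho> < ln R'" using V_lower R_pos by auto
    thus ?thesis by (simp add: c_def)
  qed
  define F where "F = {w. R' \<le> cmod w}"
  define f where "f w = U w + ln (cmod w)" for w
  have clF: "closed F" unfolding F_def by (intro closed_Collect_le continuous_intros)
  have FG: "F \<subseteq> {w. R' - R \<le> infdist w G}"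
  proof
    fix w assume "w \<in> F" thus "w \<in> {w. R' - R \<le> infdist w G}" using infdist_G_ge[of w] by (simp add: F_def)
  qed
  have contF: "continuous_on F f" unfolding f_def
  proof (intro continuous_intros)
    show "continuous_on F U"
      by (rule continuous_on_subset[OF U_continuous_on FG]) (use R' in simp)
  qed (use R'0 in \<open>auto simp: F_def\<close>)
  have aF: "a \<in> F" using a by (simp add: F_def)
  have "f a \<le> c"
  proof (rule maxp[OF clF contF _ _ aF])
    fix w assume wF: "w \<in> F" and gt: "c < f w"
    have wR': "R' < cmod w"
    proof (rule ccontr)
      assume "\<not> R' < cmod w"
      hence "cmod w = R'" using wF by (simp add: F_def)
      hence "f w \<le> c" using U_le_V[of w] by (simp add: f_def c_def)
      thus False using gt by simp
    qed
    define r where "r = (cmod w - R') / 2"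
    have r0: "0 < r" using wR' by (simp add: r_def)
    have rinf: "r < infdist w G" using infdist_G_ge[of w] wR' R' by (simp add: r_def)
    have rw: "r < cmod w" using wR' R'0 by (simp add: r_def)
    have circF: "w + of_real r * cis t \<in> F" for t
    proof -
      have "cmod w - cmod (of_real r * cis t) \<le> cmod (w + of_real r * cis t)"
        using norm_triangle_ineq2[of w "- (of_real r * cis t)"] by simp
      moreover have "cmod (of_real r * cis t) = r" using r0 by (simp add: norm_mult)
      moreover have "r \<le> cmod w - R'" using wR' by (simp add: r_def)
      ultimately show ?thesis by (simp add: F_def)
    qed
    have contU: "continuous_on {0..2*pi} (\<lambda>t. U (w + of_real r * cis t))"
    proof (rule U_circle_cont)
      show "0 < R' - R" using R' by simp
      fix t show "R' - R \<le> infdist (w + of_real r * cis t) G" using FG circF[of t] by auto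
    qed
    have hU: "((\<lambda>t. U (w + of_real r * cis t)) has_integral (2 * pi * U w)) {0..2*pi}"
    proof -
      have "((\<lambda>t. U (w + of_real r * cis t)) has_integral integral {0..2*pi} (\<lambda>t. U (w + of_real r * cis t))) {0..2*pi}"
        by (rule integrable_integral[OF integrable_continuous_interval[OF contU]])
      moreover have "integral {0..2*pi} (\<lambda>t. U (w + of_real r * cis t)) = 2 * pi * U w"
        using U_mean_value[OF r0 rinf] by simp
      ultimately show ?thesis by simp
    qed
    have hL: "((\<lambda>t. ln (cmod (w + of_real r * cis t))) has_integral (2 * pi * ln (cmod w))) {0..2*pi}"
      by (rule jensen_circle) (use r0 rw in simp)
    have "((\<lambda>t. f (w + of_real r * cis t)) has_integral (2 * pi * f w)) {0..2*pi}"
      using has_integral_add[OF hU hL] by (simp add: f_def algebra_simps)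
    hence "integral {0..2*pi} (\<lambda>t. f (w + of_real r * cis t)) = 2 * pi * f w" by (rule integral_unique)
    hence "f w = integral {0..2*pi} (\<lambda>t. f (w + of_real r * cis t)) / (2*pi)" by simp
    thus "\<exists>r::real>0. (\<forall>t. w + of_real r * cis t \<in> F) \<and>
            f w = integral {0..2*pi} (\<lambda>t. f (w + of_real r * cis t)) / (2*pi)"
      using r0 circF by blast
  next
    fix w assume wF: "w \<in> F" and wB: "R + R / c + 1 \<le> cmod w"
    have wR: "R < cmod w" using wB R_pos c0 by (smt (verit) divide_pos_pos)
    have "AE y in \<mu>. - ln (cmod (w - y)) \<le> - ln (cmod w - R)"
      using AE_K
    proof eventually_elim
      case (elim y)
      have "cmod w - cmod y \<le> cmod (w - y)" by (rule norm_triangle_ineq2)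
      hence "cmod w - R \<le> cmod (w - y)" using R_bound[OF elim] by simp
      hence "ln (cmod w - R) \<le> ln (cmod (w - y))" using wR by (intro ln_mono) auto
      thus ?case by simp
    qed
    hence Uw: "U w \<le> - ln (cmod w - R)" unfolding U_def
      by (rule P.integral_le_const[OF kern_integrable])
    have "ln (cmod w) - ln (cmod w - R) \<le> (cmod w - (cmod w - R)) / (cmod w - R)"
      by (rule ln_diff_le) (use wR R_pos in auto)
    also have "\<dots> = R / (cmod w - R)" by simp
    also have "\<dots> \<le> c"
    proof -
      have "R / c < cmod w - R" using wB by simp
      hence "R < c * (cmod w - R)" using c0 by (simp add: field_simps)
      thus ?thesis using wR by (simp add: field_simps)
    qed
    finally show "f w \<le> c" using Uw by (simp add: f_def)
  qed
  thus ?thesis by (simp add: f_def c_def)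
qed

lemma far_bound:
  assumes a: "R < cmod a" shows "U a + ln (cmod a) \<le> V + ln R"
proof (rule ccontr)
  assume neg: "\<not> ?thesis"
  define x where "x = U a + ln (cmod a) - V"
  have xR: "ln R < x" using neg by (simp add: x_def)
  hence exR: "R < exp x" using R_pos by (metis exp_ln exp_less_cancel_iff)
  define R' where "R' = min (cmod a) ((R + exp x) / 2)"
  have R'1: "R < R'" "R' \<le> cmod a" using a exR by (auto simp: R'_def)
  have "R' \<le> (R + exp x) / 2" unfolding R'_def by (rule min.cobounded2)
  hence R'2: "R' < exp x" using exR by simp
  have "x \<le> ln R'" using far_bound_R'[OF R'1] by (simp add: x_def)
  moreover have "ln R' < x" using R'2 R'1 R_pos by (metis exp_less_cancel_iff exp_ln less_trans)
  ultimately show False by simp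
qed

lemma key_integrable: "integrable \<mu> (\<lambda>z. ln (cmod (z - a)))"
proof -
  have "integrable \<mu> (\<lambda>z. - (- ln (cmod (a - z))))" using kern_integrable[of a] by (rule integrable_minus)
  thus ?thesis by (simp add: norm_minus_commute)
qed

lemma key_bound: "- V + ln (max R (cmod a)) - ln R \<le> (\<integral>z. ln (cmod (z - a)) \<partial>\<mu>)"
proof -
  have eq: "(\<integral>z. ln (cmod (z - a)) \<partial>\<mu>) = - U a"
    unfolding U_def by (simp add: norm_minus_commute)
  show ?thesis
  proof (cases "cmod a \<le> R")
    case True thus ?thesis using U_le_V[of a] eq by (simp add: max_def)
  next
    case False thus ?thesis using far_bound[of a] eq by (simp add: max_def)
  qed
qed

end

lemma coeff_linprod_bound:
  fixes as :: "complex list" and R :: real assumes R: "R > 0"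
  shows "cmod (coeff (\<Prod>a\<leftarrow>as. [:-a, 1:]) k) * R^k \<le> real (length as choose k) * (\<Prod>a\<leftarrow>as. max R (cmod a))"
proof (induction as arbitrary: k)
  case Nil thus ?case by (cases k) auto
next
  case (Cons a as)
  define Q where "Q = (\<Prod>a\<leftarrow>as. [:-a, 1:])"
  define Pr where "Pr = (\<Prod>a\<leftarrow>as. max R (cmod a))"
  have Pr0: "0 \<le> Pr" unfolding Pr_def using R by (induction as) auto
  have IH: "cmod (coeff Q j) * R^j \<le> real (length as choose j) * Pr" for j
    using Cons.IH by (simp add: Q_def Pr_def)
  have eq: "(\<Prod>a\<leftarrow>a # as. [:-a, 1:]) = smult (- a) Q + pCons 0 Q" by (simp add: Q_def)
  have M: "max R (cmod a) \<ge> R" "max R (cmod a) \<ge> cmod a" by auto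
  show ?case
  proof (cases k)
    case 0
    have "cmod (coeff (\<Prod>a\<leftarrow>a # as. [:-a, 1:]) 0) = cmod a * cmod (coeff Q 0)"
      by (simp add: eq norm_mult Q_def)
    also have "\<dots> \<le> max R (cmod a) * cmod (coeff Q 0)" by (intro mult_right_mono) auto
    also have "\<dots> \<le> max R (cmod a) * Pr" using IH[of 0] R by (intro mult_left_mono) auto
    finally show ?thesis using 0 by (simp add: Pr_def mult.commute)
  next
    case (Suc j)
    have "coeff (\<Prod>a\<leftarrow>a # as. [:-a, 1:]) k = coeff Q j - a * coeff Q k" using Suc by (simp add: eq Q_def)
    hence "cmod (coeff (\<Prod>a\<leftarrow>a # as. [:-a, 1:]) k) \<le> cmod a * cmod (coeff Q k) + cmod (coeff Q j)"
      using norm_triangle_ineq4[of "coeff Q j" "a * coeff Q k"] by (simp add: norm_mult)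
    hence "cmod (coeff (\<Prod>a\<leftarrow>a # as. [:-a, 1:]) k) * R^k \<le> (cmod a * cmod (coeff Q k) + cmod (coeff Q j)) * R^k"
      using R by (intro mult_right_mono) auto
    also have "\<dots> = cmod a * (cmod (coeff Q k) * R^k) + R * (cmod (coeff Q j) * R^j)"
      using Suc by (simp add: algebra_simps)
    also have "\<dots> \<le> max R (cmod a) * (cmod (coeff Q k) * R^k) + max R (cmod a) * (cmod (coeff Q j) * R^j)"
      using R by (intro add_mono mult_right_mono) auto
    also have "\<dots> \<le> max R (cmod a) * (real (length as choose k) * Pr) + max R (cmod a) * (real (length as choose j) * Pr)"
      using R by (intro add_mono mult_left_mono IH) auto
    also have "\<dots> = real (length (a # as) choose k) * (max R (cmod a) * Pr)"
      using Suc by (simp add: algebra_simps)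
    finally show ?thesis by (simp add: Pr_def mult.commute)
  qed
qed

lemma poly_linprod:
  fixes as :: "complex list"
  shows "z \<notin> set as \<Longrightarrow> poly (\<Prod>a\<leftarrow>as. [:-a, 1:]) z \<noteq> 0 \<and>
     ln (cmod (poly (\<Prod>a\<leftarrow>as. [:-a, 1:]) z)) = (\<Sum>a\<leftarrow>as. ln (cmod (z - a)))"
  by (induction as) (auto simp: norm_mult ln_mult left_diff_distrib[symmetric])

lemma exp_sum_list: "exp (\<Sum>x\<leftarrow>xs. f x) = (\<Prod>x\<leftarrow>xs. exp (f x :: real))"
  by (induction xs) (auto simp: exp_add)

lemma prod_list_const_mult: "(\<Prod>x\<leftarrow>xs. (c::real) * f x) = c ^ length xs * (\<Prod>x\<leftarrow>xs. f x)"
  by (induction xs) auto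

context eqm begin

lemma sum_list_integrable:
  "integrable \<mu> (\<lambda>z. \<Sum>a\<leftarrow>as. ln (cmod (z - a))) \<and>
   (\<integral>z. (\<Sum>a\<leftarrow>as. ln (cmod (z - a))) \<partial>\<mu>) = (\<Sum>a\<leftarrow>as. \<integral>z. ln (cmod (z - a)) \<partial>\<mu>)"
  by (induction as) (auto simp: key_integrable Bochner_Integration.integral_add)

lemma mahler_lower:
  assumes P0: "P \<noteq> 0" and fac: "smult (lead_coeff P) (\<Prod>a\<leftarrow>as. [:-a, 1:]) = P"
  shows "cmod (lead_coeff P) * (exp (- V) / R) ^ length as * (\<Prod>a\<leftarrow>as. max R (cmod a)) \<le> mahler \<mu> P"
proof -
  define c where "c = lead_coeff P"
  have c0: "c \<noteq> 0" using P0 by (simp add: c_def)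
  define S where "S z = (\<Sum>a\<leftarrow>as. ln (cmod (z - a)))" for z
  have poly_meas[measurable]: "poly P \<in> borel_measurable borel"
    by (rule borel_measurable_continuous_onI) (intro continuous_intros)
  have AEn: "AE z in \<mu>. \<forall>a\<in>set as. z \<noteq> a"
    by (rule eventually_ball_finite) (auto intro: AE_ne)
  have AEeq: "AE z in \<mu>. ln (cmod (poly P z)) = ln (cmod c) + S z"
    using AEn
  proof eventually_elim
    case (elim z)
    hence "z \<notin> set as" by auto
    from poly_linprod[OF this]
    have nz: "poly (\<Prod>a\<leftarrow>as. [:-a, 1:]) z \<noteq> 0" and l: "ln (cmod (poly (\<Prod>a\<leftarrow>as. [:-a, 1:]) z)) = S z"
      by (auto simp: S_def)
    have "poly P z = c * poly (\<Prod>a\<leftarrow>as. [:-a, 1:]) z"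
      by (subst fac[symmetric]) (simp add: c_def)
    hence "cmod (poly P z) = cmod c * cmod (poly (\<Prod>a\<leftarrow>as. [:-a, 1:]) z)" by (simp add: norm_mult)
    thus ?case using nz c0 l by (simp add: ln_mult)
  qed
  have intS: "integrable \<mu> S" and intS_eq: "(\<integral>z. S z \<partial>\<mu>) = (\<Sum>a\<leftarrow>as. \<integral>z. ln (cmod (z - a)) \<partial>\<mu>)"
    using sum_list_integrable[of as] by (simp_all add: S_def[abs_def])
  have S_meas[measurable]: "S \<in> borel_measurable \<mu>" using intS by (rule borel_measurable_integrable)
  have intP: "integrable \<mu> (\<lambda>z. ln (cmod (poly P z)))"
  proof (rule integrable_cong_AE_imp[of _ "\<lambda>z. ln (cmod c) + S z"])
    show "integrable \<mu> (\<lambda>z. ln (cmod c) + S z)" using intS by simp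
    show "AE z in \<mu>. ln (cmod c) + S z = ln (cmod (poly P z))" using AEeq by (auto elim: eventually_mono)
  qed measurable
  have "(\<integral>z. ln (cmod (poly P z)) \<partial>\<mu>) = (\<integral>z. ln (cmod c) + S z \<partial>\<mu>)"
    by (rule integral_cong_AE) (use AEeq in auto)
  also have "\<dots> = ln (cmod c) + (\<Sum>a\<leftarrow>as. \<integral>z. ln (cmod (z - a)) \<partial>\<mu>)"
    using intS intS_eq by (simp add: Bochner_Integration.integral_add)
  finally have intval: "(\<integral>z. ln (cmod (poly P z)) \<partial>\<mu>) = ln (cmod c) + (\<Sum>a\<leftarrow>as. \<integral>z. ln (cmod (z - a)) \<partial>\<mu>)" .
  have mah: "mahler \<mu> P = cmod c * exp (\<Sum>a\<leftarrow>as. \<integral>z. ln (cmod (z - a)) \<partial>\<mu>)"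
    unfolding mahler_def using P0 intP intval c0 by (simp add: exp_add)
  have "(\<Sum>a\<leftarrow>as. - V + ln (max R (cmod a)) - ln R) \<le> (\<Sum>a\<leftarrow>as. \<integral>z. ln (cmod (z - a)) \<partial>\<mu>)"
    by (rule sum_list_mono) (rule key_bound)
  hence le1: "exp (\<Sum>a\<leftarrow>as. - V + ln (max R (cmod a)) - ln R) \<le> exp (\<Sum>a\<leftarrow>as. \<integral>z. ln (cmod (z - a)) \<partial>\<mu>)"
    by (simp only: exp_le_cancel_iff)
  have eq1: "exp (\<Sum>a\<leftarrow>as. - V + ln (max R (cmod a)) - ln R) = (exp (- V) / R) ^ length as * (\<Prod>a\<leftarrow>as. max R (cmod a))"
  proof -
    have "exp (\<Sum>a\<leftarrow>as. - V + ln (max R (cmod a)) - ln R) = (\<Prod>a\<leftarrow>as. (exp (- V) / R) * max R (cmod a))"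
      unfolding exp_sum_list using R_pos
      by (intro arg_cong[where f = prod_list] map_cong refl) (simp add: exp_add exp_diff exp_minus field_simps)
    thus ?thesis by (simp only: prod_list_const_mult)
  qed
  have "(exp (- V) / R) ^ length as * (\<Prod>a\<leftarrow>as. max R (cmod a)) \<le> exp (\<Sum>a\<leftarrow>as. \<integral>z. ln (cmod (z - a)) \<partial>\<mu>)"
    using le1 eq1 by linarith
  hence "cmod c * ((exp (- V) / R) ^ length as * (\<Prod>a\<leftarrow>as. max R (cmod a))) \<le> mahler \<mu> P"
    unfolding mah by (rule mult_left_mono) simp
  thus ?thesis by (simp add: c_def mult.assoc)
qed

end

theorem theorem5p1:
  fixes K :: "complex set" and \<mu> :: "complex measure" and P :: "complex poly" and d k :: nat
  assumes "compact K" and "\<not> polar K"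
    and "equilibrium_measure K \<mu>"
    and "degree P \<le> d" and "k \<le> d"
  shows "cmod (coeff P k) \<le>
    real (d choose k) * mahler \<mu> P * (Sup (cmod ` K)) ^ (d - k) / log_cap K ^ d"
proof -
  from assms(3) have pK: "prob_on K \<mu>" and le: "log_energy \<mu> = robin_const K"
    by (auto simp: equilibrium_measure_def)
  have rinf: "robin_const K \<noteq> \<infinity>" using assms(2) by (auto simp: polar_def log_cap_def)
  define V where "V = (\<integral>p. - ln (cmod (fst p - snd p)) \<partial>(\<mu> \<Otimes>\<^sub>M \<mu>))"
  have cond: "(AE p in \<mu> \<Otimes>\<^sub>M \<mu>. fst p \<noteq> snd p) \<and> integrable (\<mu> \<Otimes>\<^sub>M \<mu>) (\<lambda>p. - ln (cmod (fst p - snd p)))"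
  proof (rule ccontr)
    assume "\<not> ?thesis"
    hence "log_energy \<mu> = \<infinity>" unfolding log_energy_def by auto
    thus False using le rinf by simp
  qed
  have leV: "log_energy \<mu> = ereal V" using cond by (simp add: log_energy_def V_def)
  have rob: "robin_const K = ereal V" using le leV by simp
  have cap: "log_cap K = exp (- V)" by (simp add: log_cap_def rob)
  have minimal: "ereal V \<le> log_energy \<nu>" if "prob_on K \<nu>" for \<nu>
  proof -
    have "robin_const K \<le> log_energy \<nu>" using that unfolding robin_const_def by (auto intro!: Inf_lower)
    thus ?thesis using rob by simp
  qed
  interpret E: eqm K \<mu> V
    using assms(1) pK cond V_def minimal by (intro eqm.intro) (auto simp: prob_on_def)
  define R where "R = Sup (cmod ` K)"
  have RR: "R = E.R" by (simp add: R_def E.R_def)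
  have R0: "0 < R" using E.R_pos RR by simp
  define Cp where "Cp = exp (- V)"
  have Cp0: "0 < Cp" by (simp add: Cp_def)
  have CpR: "Cp \<le> R" using E.Cap_le_R RR by (simp add: Cp_def)
  define q where "q = R / Cp"
  have q1: "1 \<le> q" using CpR Cp0 by (simp add: q_def)
  have rhs_eq: "real (d choose k) * mahler \<mu> P * R ^ (d - k) / log_cap K ^ d
      = real (d choose k) * mahler \<mu> P * q ^ d / R ^ k"
  proof -
    have "R ^ (d - k) * R ^ k = R ^ d" using assms(5) by (simp add: power_add[symmetric])
    hence "R ^ (d - k) = R ^ d / R ^ k" using R0 by (simp add: field_simps)
    thus ?thesis by (simp add: cap Cp_def[symmetric] q_def power_divide field_simps)
  qed
  have mah0: "0 \<le> mahler \<mu> P" by (simp add: mahler_def)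
  show ?thesis
  proof (cases "P = 0")
    case True thus ?thesis by (simp add: mahler_def)
  next
    case P0: False
    define c where "c = lead_coeff P"
    obtain roots where roots: "mset roots = proots P" using ex_mset by blast
    have fac: "smult c (\<Prod>a\<leftarrow>roots. [:-a, 1:]) = P"
    proof -
      have "(\<Prod>x\<in>#proots P. [:-x, 1:]) = (\<Prod>x\<leftarrow>roots. [:-x, 1:])"
        by (subst prod_mset_prod_list [symmetric]) (simp add: roots)
      thus ?thesis using complex_poly_decompose_multiset[of P] by (simp add: c_def)
    qed
    have len: "length roots = degree P"
      using roots size_proots_complex[of P] by (metis size_mset)
    define m where "m = length roots"
    define Pr where "Pr = (\<Prod>a\<leftarrow>roots. max R (cmod a))"
    have mah: "cmod c * (Cp / R) ^ m * Pr \<le> mahler \<mu> P"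
      using E.mahler_lower[OF P0 fac[unfolded c_def]] RR by (simp add: c_def Cp_def m_def Pr_def)
    show ?thesis
    proof (cases "k \<le> m")
      case False
      hence "coeff P k = 0" using len by (intro coeff_eq_0) (simp add: m_def)
      thus ?thesis using mah0 R0 cap unfolding R_def[symmetric] by simp
    next
      case True
      have cb: "cmod (coeff (\<Prod>a\<leftarrow>roots. [:-a, 1:]) k) * R^k \<le> real (m choose k) * Pr"
        using coeff_linprod_bound[OF R0, of roots k] by (simp add: m_def Pr_def)
      have ck: "coeff P k = c * coeff (\<Prod>a\<leftarrow>roots. [:-a, 1:]) k"
        by (subst fac[symmetric]) simp
      have "cmod (coeff P k) * R^k \<le> cmod c * (real (m choose k) * Pr)"
        using cb by (simp add: ck norm_mult mult.assoc mult_left_mono)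
      moreover have "cmod c * (real (m choose k) * Pr) \<le> real (m choose k) * (mahler \<mu> P * q ^ m)"
      proof -
        have eqc: "cmod c * Pr = (cmod c * (Cp / R) ^ m * Pr) * q ^ m"
          using Cp0 R0 by (simp add: q_def power_divide field_simps)
        have "(cmod c * (Cp / R) ^ m * Pr) * q ^ m \<le> mahler \<mu> P * q ^ m"
          using mah q1 by (intro mult_right_mono) auto
        hence "cmod c * Pr \<le> mahler \<mu> P * q ^ m" by (subst eqc)
        hence "real (m choose k) * (cmod c * Pr) \<le> real (m choose k) * (mahler \<mu> P * q ^ m)"
          by (intro mult_left_mono) auto
        thus ?thesis by (simp add: mult.left_commute)
      qed
      ultimately have "cmod (coeff P k) * R^k \<le> real (m choose k) * (mahler \<mu> P * q ^ m)" by linarith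
      also have "\<dots> \<le> real (d choose k) * (mahler \<mu> P * q ^ d)"
      proof (intro mult_mono mult_left_mono)
        show "real (m choose k) \<le> real (d choose k)"
          using assms(4) len by (simp add: m_def binomial_right_mono)
        show "q ^ m \<le> q ^ d" using q1 assms(4) len by (intro power_increasing) (auto simp: m_def)
      qed (use mah0 q1 in auto)
      finally have "cmod (coeff P k) * R^k \<le> real (d choose k) * (mahler \<mu> P * q ^ d)" .
      hence "cmod (coeff P k) \<le> real (d choose k) * mahler \<mu> P * q ^ d / R ^ k"
        using R0 by (simp add: field_simps)
      thus ?thesis using rhs_eq by (simp add: R_def)
    qed
  qed
qed

end
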